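(* Suppose Assumption A holds with constant $d$ and Assumption M holds with constant $\kappa^*$, let $r>0$, and suppose there is a constant $L^*\in[1,\infty)$ (depending on $\mathfrak a,\lambda$) with $\sup_{0<\epsilon<\epsilon_o}\epsilon\,m^*_\epsilon\Lambda_{(m^*_\epsilon)}/\Phi^*_\epsilon\le L^*$. Put $K^*:=10((1+1/d)\vee r/d^2)(1\vee r)(L^*/\kappa^* )$. Then $$\lim_{\epsilon\to0}\inf_{\theta^\circ\in\Theta^r_{\mathfrak a}}\mathbb E_{\theta^\circ}P_{\vartheta^{m^*_\epsilon}|Y}\Big((K^* )^{-1}\Phi^*_\epsilon\le\|\vartheta^{m^*_\epsilon}-\theta^\circ\|^2\le K^*\Phi^*_\epsilon\Big)=1.$$
   Context: Let $\ell^2$ be the space of square-summable real sequences with norm $\|\cdot\|$. Fix a bounded real sequence $\lambda=(\lambda_j)_{j\ge1}$ with $\lambda_j\ne0$ for all $j$ and a noise level $\epsilon\in(0,1)$. For a parameter $\theta^\circ$ the data $Y=(Y_j)_{j\ge1}$ satisfy $Y_j=\lambda_j\theta^\circ_j+\sqrt\epsilon\,\xi_j$ with $\xi_j$ i.i.d. $N(0,1)$; $\mathbb E_{\theta^\circ}$ denotes expectation under this law. Fix prior means $\eta=(\eta_j)_{j\ge1}$ and prior variances $\tau_j\in(0,\infty)$ (possibly depending on $\epsilon$). For $m\in\mathbb N$ the sieve prior is the law of $\vartheta^m$ with independent coordinates, $\vartheta^m_j\sim N(\eta_j,\tau_j)$ for $j\le m$ and $\vartheta^m_j=\eta_j$ a.s.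 for $j>m$, in the model $Y_j=\lambda_j\vartheta^m_j+\sqrt\epsilon\xi_j$ with $\vartheta^m$ independent of $(\xi_j)$. Put $\sigma_j:=(\lambda_j^2\epsilon^{-1}+\tau_j^{-1})^{-1}$ and $\theta^Y_j:=\sigma_j(\tau_j^{-1}\eta_j+\lambda_j\epsilon^{-1}Y_j)$. The posterior $P_{\vartheta^m|Y}$ makes the coordinates independent with $\vartheta^m_j\sim N(\theta^Y_j,\sigma_j)$ for $j\le m$ and $\vartheta^m_j=\eta_j$ for $j>m$. Let $\Lambda_j:=\lambda_j^{-2}$, $\Lambda_{(m)}:=\max_{1\le j\le m}\Lambda_j$, $\bar\Lambda_m:=m^{-1}\sum_{j=1}^m\Lambda_j$. Let $G_\epsilon:=\max\{1\le m\le\lfloor\epsilon^{-1}\rfloor:\epsilon\Lambda_{(m)}\le\Lambda_1\}$. Assumption A: there is a constant $d>0$ such that $\tau_j\ge d\,(\epsilon^{1/2}\Lambda_j^{1/2}\vee\epsilon\Lambda_j)$ for all $1\le j\le G_\epsilon$ and all $\epsilon\in(0,1)$. Let $\mathfrak a=(\mathfrak a_j)_{j\ge1}$ be strictly positive, non-increasing, with $\mathfrak a_1=1$ and $\mathfrak a_j\to0$. For $r>0$ the ellipsoid is $\Theta^r_{\mathfrak a}:=\{\theta:\sum_{j\ge1}(\theta_j-\eta_j)^2/\mathfrak a_j\le r\}$. Minimax quantities: $m^*_\epsilon:=\min\{m\ge1:\mathfrak a_m\vee\epsilon m\bar\Lambda_m\le\mathfrak a_k\vee\epsilon k\bar\Lambda_k\text{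 for all }k\ge1\}$ and $\Phi^*_\epsilon:=\mathfrak a_{m^*_\epsilon}\vee\epsilon m^*_\epsilon\bar\Lambda_{m^*_\epsilon}$. Fix $\epsilon_o\in(0,1)$. Assumption M: $\kappa^*:=\inf_{0<\epsilon<\epsilon_o}(\Phi^*_\epsilon)^{-1}[\mathfrak a_{m^*_\epsilon}\wedge\epsilon m^*_\epsilon\bar\Lambda_{m^*_\epsilon}]>0$. *)

theory Defs
  imports "HOL-Probability.Probability"
begin

text \<open>Sequences are functions nat => real indexed from 1; the value at index 0 is
  irrelevant (it never enters any quantity below).\<close>

definition sqnorm :: "(nat \<Rightarrow> real) \<Rightarrow> real" where
  "sqnorm x = (\<Sum>j. (x (Suc j))\<^sup>2)"

definition Lam :: "(nat \<Rightarrow> real) \<Rightarrow> nat \<Rightarrow> real" where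
  "Lam lam j = 1 / (lam j)\<^sup>2"

definition Lam_max :: "(nat \<Rightarrow> real) \<Rightarrow> nat \<Rightarrow> real" where
  "Lam_max lam m = Max (Lam lam ` {1..m})"

definition Lam_bar :: "(nat \<Rightarrow> real) \<Rightarrow> nat \<Rightarrow> real" where
  "Lam_bar lam m = (\<Sum>j=1..m. Lam lam j) / real m"

definition G_eps :: "(nat \<Rightarrow> real) \<Rightarrow> real \<Rightarrow> nat" where
  "G_eps lam eps = Max {m. 1 \<le> m \<and> m \<le> nat \<lfloor>1 / eps\<rfloor> \<and> eps * Lam_max lam m \<le> Lam lam 1}"

definition rate :: "(nat \<Rightarrow> real) \<Rightarrow> (nat \<Rightarrow> real) \<Rightarrow> real \<Rightarrow> nat \<Rightarrow> real" where
  "rate a lam eps m = max (a m) (eps * real m * Lam_bar lam m)"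

definition m_star :: "(nat \<Rightarrow> real) \<Rightarrow> (nat \<Rightarrow> real) \<Rightarrow> real \<Rightarrow> nat" where
  "m_star a lam eps = (LEAST m. 1 \<le> m \<and> (\<forall>k\<ge>1. rate a lam eps m \<le> rate a lam eps k))"

definition Phi_star :: "(nat \<Rightarrow> real) \<Rightarrow> (nat \<Rightarrow> real) \<Rightarrow> real \<Rightarrow> real" where
  "Phi_star a lam eps = rate a lam eps (m_star a lam eps)"

definition kappa_star :: "(nat \<Rightarrow> real) \<Rightarrow> (nat \<Rightarrow> real) \<Rightarrow> real \<Rightarrow> real" where
  "kappa_star a lam eps_o = (INF eps \<in> {0<..<eps_o}.
     min (a (m_star a lam eps)) (eps * real (m_star a lam eps) * Lam_bar lam (m_star a lam eps))
       / Phi_star a lam eps)"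

definition ellipsoid :: "(nat \<Rightarrow> real) \<Rightarrow> (nat \<Rightarrow> real) \<Rightarrow> real \<Rightarrow> (nat \<Rightarrow> real) set" where
  "ellipsoid a eta r = {\<theta>. summable (\<lambda>j. (\<theta> (Suc j) - eta (Suc j))\<^sup>2 / a (Suc j)) \<and>
       (\<Sum>j. (\<theta> (Suc j) - eta (Suc j))\<^sup>2 / a (Suc j)) \<le> r}"

text \<open>Law of the data Y with Y_j = lam_j theta_j + sqrt eps xi_j (xi_j iid N(0,1)).\<close>
definition data_law :: "(nat \<Rightarrow> real) \<Rightarrow> real \<Rightarrow> (nat \<Rightarrow> real) \<Rightarrow> (nat \<Rightarrow> real) measure" where
  "data_law lam eps \<theta> = (\<Pi>\<^sub>M j\<in>UNIV. density lborel (normal_density (lam j * \<theta> j) (sqrt eps)))"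

definition post_var :: "(nat \<Rightarrow> real) \<Rightarrow> (real \<Rightarrow> nat \<Rightarrow> real) \<Rightarrow> real \<Rightarrow> nat \<Rightarrow> real" where
  "post_var lam tau eps j = 1 / ((lam j)\<^sup>2 / eps + 1 / tau eps j)"

definition post_mean :: "(nat \<Rightarrow> real) \<Rightarrow> (nat \<Rightarrow> real) \<Rightarrow> (real \<Rightarrow> nat \<Rightarrow> real) \<Rightarrow> real
    \<Rightarrow> (nat \<Rightarrow> real) \<Rightarrow> nat \<Rightarrow> real" where
  "post_mean lam eta tau eps Y j = post_var lam tau eps j * (eta j / tau eps j + lam j * Y j / eps)"

text \<open>Posterior of the sieve prior with dimension m given data Y:
  independent coordinates, N(post_mean, post_var) for 1 <= j <= m, point mass at eta_j otherwise.
  (normal_density takes the standard deviation.)\<close>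
definition posterior :: "(nat \<Rightarrow> real) \<Rightarrow> (nat \<Rightarrow> real) \<Rightarrow> (real \<Rightarrow> nat \<Rightarrow> real) \<Rightarrow> real
    \<Rightarrow> nat \<Rightarrow> (nat \<Rightarrow> real) \<Rightarrow> (nat \<Rightarrow> real) measure" where
  "posterior lam eta tau eps m Y = (\<Pi>\<^sub>M j\<in>UNIV.
     (if 1 \<le> j \<and> j \<le> m
      then density lborel (normal_density (post_mean lam eta tau eps Y j) (sqrt (post_var lam tau eps j)))
      else return borel (eta j)))"

end

theory Submission
  imports Defs
begin


lemma PiM_UNIV_prod_integral:
  fixes M :: "nat \<Rightarrow> real measure" and h :: "nat \<Rightarrow> real \<Rightarrow> real"
  assumes P: "\<And>i. prob_space (M i)" and J: "finite J"
    and int: "\<And>i. i \<in> J \<Longrightarrow> integrable (M i) (h i)"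
  shows "integrable (PiM UNIV M) (\<lambda>x. \<Prod>i\<in>J. h i (x i))"
    "integral\<^sup>L (PiM UNIV M) (\<lambda>x. \<Prod>i\<in>J. h i (x i)) = (\<Prod>i\<in>J. integral\<^sup>L (M i) (h i))"
proof -
  interpret product_prob_space M UNIV by (simp add: P product_prob_spaceI)
  have meas[measurable]: "\<And>i. i \<in> J \<Longrightarrow> h i \<in> borel_measurable (M i)" using int by auto
  have F: "(\<lambda>y. \<Prod>i\<in>J. h i (y i)) \<in> borel_measurable (PiM J M)"
  proof (rule borel_measurable_prod)
    fix i assume i: "i \<in> J"
    show "(\<lambda>y. h i (y i)) \<in> borel_measurable (PiM J M)"
      by (rule measurable_compose[OF measurable_component_singleton[OF i, of M] meas[OF i]])
  qed
  have eq: "(\<lambda>x. \<Prod>i\<in>J. h i (x i)) = (\<lambda>x. (\<lambda>y. \<Prod>i\<in>J. h i (y i)) (restrict x J))"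
    by auto
  have D: "distr (PiM UNIV M) (PiM J M) (\<lambda>x. restrict x J) = PiM J M"
    by (rule distr_PiM_restrict_finite[OF J]) auto
  have R: "(\<lambda>x. restrict x J) \<in> measurable (PiM UNIV M) (PiM J M)"
    by (rule measurable_restrict_subset) auto
  have I1: "integrable (PiM J M) (\<lambda>y. \<Prod>i\<in>J. h i (y i))"
    by (rule product_integrable_prod[OF J int])
  show "integrable (PiM UNIV M) (\<lambda>x. \<Prod>i\<in>J. h i (x i))"
    apply (subst eq)
    using integrable_distr_eq[OF R F] I1 D by simp
  have "integral\<^sup>L (PiM UNIV M) (\<lambda>x. \<Prod>i\<in>J. h i (x i))
      = integral\<^sup>L (distr (PiM UNIV M) (PiM J M) (\<lambda>x. restrict x J)) (\<lambda>y. \<Prod>i\<in>J. h i (y i))"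
    apply (subst eq) by (rule integral_distr[OF R F, symmetric])
  also have "\<dots> = integral\<^sup>L (PiM J M) (\<lambda>y. \<Prod>i\<in>J. h i (y i))" using D by simp
  also have "\<dots> = (\<Prod>i\<in>J. integral\<^sup>L (M i) (h i))"
    by (rule product_integral_prod[OF J int])
  finally show "integral\<^sup>L (PiM UNIV M) (\<lambda>x. \<Prod>i\<in>J. h i (x i)) = (\<Prod>i\<in>J. integral\<^sup>L (M i) (h i))" .
qed

lemma PiM_UNIV_chebyshev:
  fixes M :: "nat \<Rightarrow> real measure" and f :: "nat \<Rightarrow> real \<Rightarrow> real"
  assumes Pr: "\<And>i. prob_space (M i)" and J: "finite J"
    and int1: "\<And>i. i \<in> J \<Longrightarrow> integrable (M i) (f i)"
    and int2: "\<And>i. i \<in> J \<Longrightarrow> integrable (M i) (\<lambda>x. (f i x)\<^sup>2)"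
    and t: "0 < t"
  shows "measure (PiM UNIV M) {x \<in> space (PiM UNIV M).
      t \<le> \<bar>(\<Sum>i\<in>J. f i (x i)) - (\<Sum>i\<in>J. integral\<^sup>L (M i) (f i))\<bar>}
    \<le> (\<Sum>i\<in>J. integral\<^sup>L (M i) (\<lambda>x. (f i x - integral\<^sup>L (M i) (f i))\<^sup>2)) / t\<^sup>2"
proof -
  interpret product_prob_space M UNIV by (simp add: Pr product_prob_spaceI)
  define e where "e i = integral\<^sup>L (M i) (f i)" for i
  define g where "g i x = f i x - e i" for i x
  have gint: "integrable (M i) (g i)" if "i \<in> J" for i
    unfolding g_def using int1[OF that] by auto
  have g0: "integral\<^sup>L (M i) (g i) = 0" if "i \<in> J" for i
    unfolding g_def e_def using int1[OF that] M.prob_space by (simp add: prob_space)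
  have g2int: "integrable (M i) (\<lambda>x. g i x * g i x)" if "i \<in> J" for i
  proof -
    have "integrable (M i) (\<lambda>x. (f i x)\<^sup>2 - 2 * e i * f i x + (e i)\<^sup>2)"
      using int1[OF that] int2[OF that] by auto
    then show ?thesis unfolding g_def by (simp add: power2_eq_square algebra_simps)
  qed
  have cross: "integrable (PiM UNIV M) (\<lambda>x. g i (x i) * g k (x k)) \<and>
      integral\<^sup>L (PiM UNIV M) (\<lambda>x. g i (x i) * g k (x k)) =
      (if i = k then integral\<^sup>L (M i) (\<lambda>x. g i x * g i x) else 0)"
    if ik: "i \<in> J" "k \<in> J" for i k
  proof (cases "i = k")
    case True
    have "integrable (PiM UNIV M) (\<lambda>x. \<Prod>l\<in>{i}. (\<lambda>x. g i x * g i x) (x l))"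
      "integral\<^sup>L (PiM UNIV M) (\<lambda>x. \<Prod>l\<in>{i}. (\<lambda>x. g i x * g i x) (x l)) =
        (\<Prod>l\<in>{i}. integral\<^sup>L (M l) (\<lambda>x. g i x * g i x))"
      using PiM_UNIV_prod_integral[where M=M and J="{i}" and h="\<lambda>_ x. g i x * g i x", OF Pr] g2int[OF ik(1)] by auto
    then show ?thesis using True by simp
  next
    case False
    have "integrable (PiM UNIV M) (\<lambda>x. \<Prod>l\<in>{i,k}. g l (x l))"
      "integral\<^sup>L (PiM UNIV M) (\<lambda>x. \<Prod>l\<in>{i,k}. g l (x l)) = (\<Prod>l\<in>{i,k}. integral\<^sup>L (M l) (g l))"
      using PiM_UNIV_prod_integral[where M=M and J="{i,k}" and h=g, OF Pr] gint ik by auto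
    then show ?thesis using False g0 ik by simp
  qed
  define X where "X x = (\<Sum>i\<in>J. g i (x i))" for x
  have X2: "(X x)\<^sup>2 = (\<Sum>i\<in>J. \<Sum>k\<in>J. g i (x i) * g k (x k))" for x
    unfolding X_def power2_eq_square sum_product ..
  have X2int: "integrable (PiM UNIV M) (\<lambda>x. (X x)\<^sup>2)"
    unfolding X2 using cross by (intro Bochner_Integration.integrable_sum) blast
  have X2val: "integral\<^sup>L (PiM UNIV M) (\<lambda>x. (X x)\<^sup>2) = (\<Sum>i\<in>J. integral\<^sup>L (M i) (\<lambda>x. g i x * g i x))"
  proof -
    have "integral\<^sup>L (PiM UNIV M) (\<lambda>x. (X x)\<^sup>2) =
        (\<Sum>i\<in>J. \<Sum>k\<in>J. integral\<^sup>L (PiM UNIV M) (\<lambda>x. g i (x i) * g k (x k)))"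
      unfolding X2 using cross
      using cross by (simp add: Bochner_Integration.integral_sum Bochner_Integration.integrable_sum)
    also have "\<dots> = (\<Sum>i\<in>J. \<Sum>k\<in>J. (if i = k then integral\<^sup>L (M i) (\<lambda>x. g i x * g i x) else 0))"
      using cross by (intro sum.cong refl) auto
    also have "\<dots> = (\<Sum>i\<in>J. integral\<^sup>L (M i) (\<lambda>x. g i x * g i x))"
      using J by (simp add: sum.delta)
    finally show ?thesis .
  qed
  have Xeq: "(\<Sum>i\<in>J. f i (x i)) - (\<Sum>i\<in>J. integral\<^sup>L (M i) (f i)) = X x" for x
    unfolding X_def g_def e_def by (simp add: sum_subtractf)
  have set_eq: "{x \<in> space (PiM UNIV M). t \<le> \<bar>(\<Sum>i\<in>J. f i (x i)) - (\<Sum>i\<in>J. integral\<^sup>L (M i) (f i))\<bar>}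
      = {x \<in> space (PiM UNIV M). t\<^sup>2 \<le> (X x)\<^sup>2}"
  proof -
    have "t \<le> \<bar>X x\<bar> \<longleftrightarrow> t\<^sup>2 \<le> (X x)\<^sup>2" for x
      using t by (metis abs_le_square_iff abs_of_pos)
    then show ?thesis by (auto simp: Xeq)
  qed
  have "measure (PiM UNIV M) {x \<in> space (PiM UNIV M). t\<^sup>2 \<le> (X x)\<^sup>2}
      \<le> integral\<^sup>L (PiM UNIV M) (\<lambda>x. (X x)\<^sup>2) / t\<^sup>2"
    by (rule integral_Markov_inequality_measure[OF X2int]) (use t in auto)
  also have "\<dots> = (\<Sum>i\<in>J. integral\<^sup>L (M i) (\<lambda>x. (f i x - integral\<^sup>L (M i) (f i))\<^sup>2)) / t\<^sup>2"
    unfolding X2val g_def e_def by (simp add: power2_eq_square)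
  finally show ?thesis unfolding set_eq .
qed

lemma normal_poly4:
  fixes \<mu> s c0 c1 c2 c3 c4 :: real
  assumes s: "0 < s"
  shows "has_bochner_integral lborel
     (\<lambda>x. normal_density \<mu> s x * (c0 + c1 * (x-\<mu>) + c2 * (x-\<mu>)^2 + c3 * (x-\<mu>)^3 + c4 * (x-\<mu>)^4))
     (c0 + c2 * s^2 + 3 * c4 * s^4)"
proof -
  have m0: "has_bochner_integral lborel (\<lambda>x. normal_density \<mu> s x * (x-\<mu>)^(2*0)) 1"
    using normal_moment_even[OF s, of \<mu> 0] by simp
  have m2: "has_bochner_integral lborel (\<lambda>x. normal_density \<mu> s x * (x-\<mu>)^(2*1)) (s^2)"
    using normal_moment_even[OF s, of \<mu> 1] s by (simp add: field_simps)
  have m4: "has_bochner_integral lborel (\<lambda>x. normal_density \<mu> s x * (x-\<mu>)^(2*2)) (3 * s^4)"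
  proof -
    have "fact (2 * 2) / ((2 / s\<^sup>2) ^ 2 * fact 2) = (3 * s^4::real)"
      using s by (simp add: fact_numeral field_simps power2_eq_square power4_eq_xxxx)
    then show ?thesis using normal_moment_even[OF s, of \<mu> 2] by simp
  qed
  have m1: "has_bochner_integral lborel (\<lambda>x. normal_density \<mu> s x * (x-\<mu>)^(2*0+1)) 0"
    using normal_moment_odd[OF s, of \<mu> 0] by simp
  have m3: "has_bochner_integral lborel (\<lambda>x. normal_density \<mu> s x * (x-\<mu>)^(2*1+1)) 0"
    using normal_moment_odd[OF s, of \<mu> 1] by simp
  have "has_bochner_integral lborel
     (\<lambda>x. c0 * (normal_density \<mu> s x * (x-\<mu>)^(2*0)) + c1 * (normal_density \<mu> s x * (x-\<mu>)^(2*0+1))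
        + c2 * (normal_density \<mu> s x * (x-\<mu>)^(2*1)) + c3 * (normal_density \<mu> s x * (x-\<mu>)^(2*1+1))
        + c4 * (normal_density \<mu> s x * (x-\<mu>)^(2*2)))
     (c0 * 1 + c1 * 0 + c2 * s^2 + c3 * 0 + c4 * (3 * s^4))"
    by (intro has_bochner_integral_add has_bochner_integral_mult_right m0 m1 m2 m3 m4)
  then show ?thesis
    by (rule has_bochner_integral_cong[THEN iffD1, rotated -1]) (simp_all add: distrib_left mult_ac)
qed

lemma normal_sq_moments:
  fixes \<mu> s \<alpha> \<beta> :: real
  assumes s: "0 < s"
  shows "integrable (density lborel (normal_density \<mu> s)) (\<lambda>x. (\<alpha>*x+\<beta>)\<^sup>2)"
    "integrable (density lborel (normal_density \<mu> s)) (\<lambda>x. ((\<alpha>*x+\<beta>)\<^sup>2)\<^sup>2)"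
    "integral\<^sup>L (density lborel (normal_density \<mu> s)) (\<lambda>x. (\<alpha>*x+\<beta>)\<^sup>2) = \<alpha>^2* s^2 + (\<alpha>*\<mu>+\<beta>)\<^sup>2"
    "integral\<^sup>L (density lborel (normal_density \<mu> s)) (\<lambda>x. ((\<alpha>*x+\<beta>)\<^sup>2 - (\<alpha>^2* s^2 + (\<alpha>*\<mu>+\<beta>)\<^sup>2))\<^sup>2)
       = 2*\<alpha>^4* s^4 + 4*\<alpha>^2* s^2*(\<alpha>*\<mu>+\<beta>)\<^sup>2"
proof -
  define \<gamma> where "\<gamma> = \<alpha>*\<mu>+\<beta>"
  have A: "has_bochner_integral lborel (\<lambda>x. normal_density \<mu> s x * (\<alpha>*x+\<beta>)\<^sup>2) (\<alpha>^2* s^2 + \<gamma>\<^sup>2)"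
  proof -
    have "has_bochner_integral lborel
     (\<lambda>x. normal_density \<mu> s x * (\<gamma>\<^sup>2 + (2*\<alpha>*\<gamma>) * (x-\<mu>) + \<alpha>\<^sup>2 * (x-\<mu>)^2 + 0 * (x-\<mu>)^3 + 0 * (x-\<mu>)^4))
     (\<gamma>\<^sup>2 + \<alpha>\<^sup>2 * s^2 + 3 * 0 * s^4)" by (rule normal_poly4[OF s])
    moreover have "\<And>x. (\<gamma>\<^sup>2 + (2*\<alpha>*\<gamma>) * (x-\<mu>) + \<alpha>\<^sup>2 * (x-\<mu>)^2 + 0 * (x-\<mu>)^3 + 0 * (x-\<mu>)^4) = (\<alpha>*x+\<beta>)\<^sup>2"
      unfolding \<gamma>_def by algebra
    moreover have "(\<gamma>\<^sup>2 + \<alpha>\<^sup>2 * s^2 + 3 * 0 * s^4) = \<alpha>\<^sup>2* s\<^sup>2 + \<gamma>\<^sup>2" by algebra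
    ultimately show ?thesis by (simp only:)
  qed
  have B: "has_bochner_integral lborel (\<lambda>x. normal_density \<mu> s x * ((\<alpha>*x+\<beta>)\<^sup>2)\<^sup>2)
      (\<gamma>^4 + 6*\<alpha>\<^sup>2*\<gamma>\<^sup>2 * s^2 + 3 * \<alpha>^4 * s^4)"
  proof -
    have "has_bochner_integral lborel
     (\<lambda>x. normal_density \<mu> s x * (\<gamma>^4 + (4*\<alpha>*\<gamma>^3) * (x-\<mu>) + (6*\<alpha>\<^sup>2*\<gamma>\<^sup>2) * (x-\<mu>)^2
         + (4*\<alpha>^3*\<gamma>) * (x-\<mu>)^3 + \<alpha>^4 * (x-\<mu>)^4))
     (\<gamma>^4 + (6*\<alpha>\<^sup>2*\<gamma>\<^sup>2) * s^2 + 3 * \<alpha>^4 * s^4)" by (rule normal_poly4[OF s])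
    moreover have "\<And>x. (\<gamma>^4 + (4*\<alpha>*\<gamma>^3) * (x-\<mu>) + (6*\<alpha>\<^sup>2*\<gamma>\<^sup>2) * (x-\<mu>)^2
         + (4*\<alpha>^3*\<gamma>) * (x-\<mu>)^3 + \<alpha>^4 * (x-\<mu>)^4) = ((\<alpha>*x+\<beta>)\<^sup>2)\<^sup>2"
      unfolding \<gamma>_def by algebra
    moreover have "(\<gamma>^4 + (6*\<alpha>\<^sup>2*\<gamma>\<^sup>2) * s^2 + 3 * \<alpha>^4 * s^4) = \<gamma>^4 + 6*\<alpha>\<^sup>2*\<gamma>\<^sup>2 * s^2 + 3 * \<alpha>^4 * s^4" by simp
    ultimately show ?thesis by (simp only:)
  qed
  have C: "has_bochner_integral lborel
      (\<lambda>x. normal_density \<mu> s x * ((\<alpha>*x+\<beta>)\<^sup>2 - (\<alpha>^2* s^2 + \<gamma>\<^sup>2))\<^sup>2)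
      (2*\<alpha>^4* s^4 + 4*\<alpha>^2* s^2*\<gamma>\<^sup>2)"
  proof -
    have "has_bochner_integral lborel
     (\<lambda>x. normal_density \<mu> s x * (\<alpha>^4* s^4 + (-4*\<alpha>^3*\<gamma>* s\<^sup>2) * (x-\<mu>) + (4*\<alpha>\<^sup>2*\<gamma>\<^sup>2 - 2*\<alpha>^4* s\<^sup>2) * (x-\<mu>)^2
         + (4*\<alpha>^3*\<gamma>) * (x-\<mu>)^3 + \<alpha>^4 * (x-\<mu>)^4))
     (\<alpha>^4* s^4 + (4*\<alpha>\<^sup>2*\<gamma>\<^sup>2 - 2*\<alpha>^4* s\<^sup>2) * s^2 + 3 * \<alpha>^4 * s^4)" by (rule normal_poly4[OF s])
    moreover have "\<And>x. (\<alpha>^4* s^4 + (-4*\<alpha>^3*\<gamma>* s\<^sup>2) * (x-\<mu>) + (4*\<alpha>\<^sup>2*\<gamma>\<^sup>2 - 2*\<alpha>^4* s\<^sup>2) * (x-\<mu>)^2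
         + (4*\<alpha>^3*\<gamma>) * (x-\<mu>)^3 + \<alpha>^4 * (x-\<mu>)^4) = ((\<alpha>*x+\<beta>)\<^sup>2 - (\<alpha>^2* s^2 + \<gamma>\<^sup>2))\<^sup>2"
      unfolding \<gamma>_def by algebra
    moreover have "(\<alpha>^4* s^4 + (4*\<alpha>\<^sup>2*\<gamma>\<^sup>2 - 2*\<alpha>^4* s\<^sup>2) * s^2 + 3 * \<alpha>^4 * s^4) = 2*\<alpha>^4* s^4 + 4*\<alpha>\<^sup>2* s\<^sup>2*\<gamma>\<^sup>2" by algebra
    ultimately show ?thesis by (simp only:)
  qed
  have conv: "integrable (density lborel (normal_density \<mu> s)) f \<longleftrightarrow> integrable lborel (\<lambda>x. normal_density \<mu> s x * f x)"
    "integral\<^sup>L (density lborel (normal_density \<mu> s)) f = integral\<^sup>L lborel (\<lambda>x. normal_density \<mu> s x * f x)"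
    if "f \<in> borel_measurable borel" for f :: "real \<Rightarrow> real"
    using integrable_density[of f lborel "normal_density \<mu> s"] integral_density[of f lborel "normal_density \<mu> s"] that
    by auto
  show "integrable (density lborel (normal_density \<mu> s)) (\<lambda>x. (\<alpha>*x+\<beta>)\<^sup>2)"
    using A by (subst conv) (auto simp: integrable.simps)
  show "integrable (density lborel (normal_density \<mu> s)) (\<lambda>x. ((\<alpha>*x+\<beta>)\<^sup>2)\<^sup>2)"
    using B by (subst conv) (auto simp: integrable.simps)
  show "integral\<^sup>L (density lborel (normal_density \<mu> s)) (\<lambda>x. (\<alpha>*x+\<beta>)\<^sup>2) = \<alpha>^2* s^2 + (\<alpha>*\<mu>+\<beta>)\<^sup>2"
    using A by (subst conv) (auto simp: \<gamma>_def has_bochner_integral_integral_eq)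
  show "integral\<^sup>L (density lborel (normal_density \<mu> s)) (\<lambda>x. ((\<alpha>*x+\<beta>)\<^sup>2 - (\<alpha>^2* s^2 + (\<alpha>*\<mu>+\<beta>)\<^sup>2))\<^sup>2)
       = 2*\<alpha>^4* s^4 + 4*\<alpha>^2* s^2*(\<alpha>*\<mu>+\<beta>)\<^sup>2"
    using C by (subst conv) (auto simp: \<gamma>_def has_bochner_integral_integral_eq)
qed

lemma std_normal_affine_distr:
  fixes m s :: real assumes s: "0 < s"
  shows "distr (density lborel std_normal_density) lborel (\<lambda>z. m + s * z) = density lborel (normal_density m s)"
proof -
  interpret prob_space "density lborel std_normal_density"
    by (rule prob_space_normal_density) simp
  have "distributed (density lborel std_normal_density) lborel (\<lambda>x. x) std_normal_density"
    unfolding distributed_def by (auto simp: distr_id2 intro!: density_cong) 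
  from normal_density_affine[OF this, of s m] s
  show ?thesis unfolding distributed_def by simp
qed

lemma PiM_normal_affine:
  fixes \<mu> s :: "nat \<Rightarrow> real"
  assumes J: "finite J" and s: "\<And>j. 0 < s j"
  shows "PiM J (\<lambda>j. density lborel (normal_density (\<mu> j) (s j))) =
    distr (PiM J (\<lambda>_. density lborel std_normal_density)) (PiM J (\<lambda>_. borel)) (\<lambda>z. \<lambda>j\<in>J. \<mu> j + s j * z j)"
proof -
  define Nm where "Nm j = density lborel (normal_density (\<mu> j) (s j))" for j
  define Z where "Z = density lborel std_normal_density"
  interpret Nm: product_prob_space Nm UNIV
    by (intro product_prob_spaceI) (auto simp: Nm_def s intro!: prob_space_normal_density)
  interpret Z: product_prob_space "\<lambda>_. Z" UNIV
    by (intro product_prob_spaceI) (auto simp: Z_def intro!: prob_space_normal_density)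
  have G: "(\<lambda>z. \<lambda>j\<in>J. \<mu> j + s j * z j) \<in> measurable (PiM J (\<lambda>_. Z)) (PiM J (\<lambda>_. borel))"
    by (intro measurable_restrict) (auto simp: Z_def)
  have "distr (PiM J (\<lambda>_. Z)) (PiM J (\<lambda>_. borel)) (\<lambda>z. \<lambda>j\<in>J. \<mu> j + s j * z j) = PiM J Nm"
  proof (rule Nm.PiM_eqI[OF J])
    show "sets (distr (PiM J (\<lambda>_. Z)) (PiM J (\<lambda>_. borel)) (\<lambda>z. \<lambda>j\<in>J. \<mu> j + s j * z j)) = sets (PiM J Nm)"
      by (auto simp: Nm_def intro!: sets_PiM_cong)
    fix A assume A: "\<And>i. i \<in> J \<Longrightarrow> A i \<in> sets (Nm i)"
    then have A': "\<And>i. i \<in> J \<Longrightarrow> A i \<in> sets borel" by (auto simp: Nm_def)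
    have pre: "(\<lambda>z. \<mu> j + s j * z) -` A j \<in> sets borel" if "j \<in> J" for j
      by (rule measurable_sets_borel[OF _ A'[OF that]]) simp
    have "emeasure (distr (PiM J (\<lambda>_. Z)) (PiM J (\<lambda>_. borel)) (\<lambda>z. \<lambda>j\<in>J. \<mu> j + s j * z j)) (Pi\<^sub>E J A)
        = emeasure (PiM J (\<lambda>_. Z)) ((\<lambda>z. \<lambda>j\<in>J. \<mu> j + s j * z j) -` Pi\<^sub>E J A \<inter> space (PiM J (\<lambda>_. Z)))"
      by (intro emeasure_distr G sets_PiM_I_finite J A')
    also have "(\<lambda>z. \<lambda>j\<in>J. \<mu> j + s j * z j) -` Pi\<^sub>E J A \<inter> space (PiM J (\<lambda>_. Z))
        = Pi\<^sub>E J (\<lambda>j. (\<lambda>z. \<mu> j + s j * z) -` A j \<inter> space Z)"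
      by (auto simp: space_PiM PiE_def Pi_def extensional_def Z_def)
    also have "emeasure (PiM J (\<lambda>_. Z)) (Pi\<^sub>E J (\<lambda>j. (\<lambda>z. \<mu> j + s j * z) -` A j \<inter> space Z))
        = (\<Prod>j\<in>J. emeasure Z ((\<lambda>z. \<mu> j + s j * z) -` A j \<inter> space Z))"
      using pre by (intro Z.emeasure_PiM J) (auto simp: Z_def)
    also have "\<dots> = (\<Prod>j\<in>J. emeasure (distr Z lborel (\<lambda>z. \<mu> j + s j * z)) (A j))"
      using A' by (intro prod.cong refl emeasure_distr[symmetric]) (auto simp: Z_def)
    also have "\<dots> = (\<Prod>j\<in>J. emeasure (Nm j) (A j))"
      unfolding Z_def Nm_def using std_normal_affine_distr[OF s] by simp
    finally show "emeasure (distr (PiM J (\<lambda>_. Z)) (PiM J (\<lambda>_. borel)) (\<lambda>z. \<lambda>j\<in>J. \<mu> j + s j * z j)) (Pi\<^sub>E J A)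
        = (\<Prod>j\<in>J. emeasure (Nm j) (A j))" .
  qed
  then show ?thesis unfolding Nm_def Z_def by simp
qed

lemma measurable_PiM_normal_measure:
  fixes \<mu> :: "'a \<Rightarrow> nat \<Rightarrow> real" and s :: "nat \<Rightarrow> real"
  assumes J: "finite J" and s: "\<And>j. 0 < s j" and A: "A \<in> sets (PiM J (\<lambda>_. borel))"
    and mu[measurable]: "\<And>j. (\<lambda>Y. \<mu> Y j) \<in> borel_measurable N"
  shows "(\<lambda>Y. measure (PiM J (\<lambda>j. density lborel (normal_density (\<mu> Y j) (s j)))) A) \<in> borel_measurable N"
proof -
  define Z where "Z = PiM J (\<lambda>_. density lborel std_normal_density)"
  interpret Z: prob_space Z unfolding Z_def
    by (intro prob_space_PiM prob_space_normal_density) auto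
  define G where "G Y z = (\<lambda>j\<in>J. \<mu> Y j + s j * z j)" for Y z
  have Gm: "(\<lambda>p. G (fst p) (snd p)) \<in> measurable (N \<Otimes>\<^sub>M Z) (PiM J (\<lambda>_. borel))"
    unfolding G_def Z_def by (intro measurable_restrict) measurable
  have GmY: "G Y \<in> measurable Z (PiM J (\<lambda>_. borel))" if "Y \<in> space N" for Y
    using measurable_Pair2[OF Gm that] by simp
  define Q where "Q = (\<lambda>p. G (fst p) (snd p)) -` A \<inter> space (N \<Otimes>\<^sub>M Z)"
  have Q: "Q \<in> sets (N \<Otimes>\<^sub>M Z)" unfolding Q_def using Gm A by (rule measurable_sets)
  have eq: "measure (PiM J (\<lambda>j. density lborel (normal_density (\<mu> Y j) (s j)))) A
      = enn2real (emeasure Z (Pair Y -` Q))" if Y: "Y \<in> space N" for Y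
  proof -
    have "measure (PiM J (\<lambda>j. density lborel (normal_density (\<mu> Y j) (s j)))) A
       = measure (distr Z (PiM J (\<lambda>_. borel)) (G Y)) A"
      unfolding Z_def G_def by (subst PiM_normal_affine[OF J s]) simp
    also have "\<dots> = measure Z (G Y -` A \<inter> space Z)"
      by (rule measure_distr[OF GmY[OF Y] A])
    also have "G Y -` A \<inter> space Z = Pair Y -` Q"
      using Y by (auto simp: Q_def space_pair_measure)
    finally show ?thesis by (simp add: measure_def)
  qed
  have "(\<lambda>Y. enn2real (emeasure Z (Pair Y -` Q))) \<in> borel_measurable N"
    using Z.measurable_emeasure_Pair[OF Q] by measurable
  then show ?thesis by (rule measurable_cong[THEN iffD1, rotated]) (simp add: eq)
qed

lemma sqnorm_split:
  fixes v c \<theta> :: "nat \<Rightarrow> real"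
  assumes summ: "summable (\<lambda>j. (c (Suc j) - \<theta> (Suc j))\<^sup>2)"
    and out: "\<And>j. m < j \<Longrightarrow> v j = c j"
  shows "sqnorm (\<lambda>j. v j - \<theta> j) = (\<Sum>j\<in>{1..m}. (v j - \<theta> j)\<^sup>2) + (\<Sum>n. (c (Suc (n+m)) - \<theta> (Suc (n+m)))\<^sup>2)"
proof -
  define f where "f j = (v (Suc j) - \<theta> (Suc j))\<^sup>2" for j
  have ev: "eventually (\<lambda>j. f j = (c (Suc j) - \<theta> (Suc j))\<^sup>2) sequentially"
    unfolding f_def eventually_sequentially by (intro exI[of _ m]) (auto simp: out)
  have sf: "summable f" using summable_cong[OF ev] summ by simp
  have "sqnorm (\<lambda>j. v j - \<theta> j) = suminf f" unfolding sqnorm_def f_def ..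
  also have "\<dots> = (\<Sum>n. f (n + m)) + (\<Sum>i<m. f i)" by (rule suminf_split_initial_segment[OF sf])
  also have "(\<Sum>n. f (n + m)) = (\<Sum>n. (c (Suc (n+m)) - \<theta> (Suc (n+m)))\<^sup>2)"
    unfolding f_def by (simp add: out)
  also have "(\<Sum>i<m. f i) = (\<Sum>j\<in>{1..m}. (v j - \<theta> j)\<^sup>2)"
    unfolding f_def by (rule sum_bounds_lt_plus1)
  finally show ?thesis by simp
qed

lemma comp_borel_meas:
  fixes P :: "nat \<Rightarrow> real measure"
  assumes "\<And>j. sets (P j) = sets borel" "j \<in> I"
  shows "(\<lambda>v. v j) \<in> borel_measurable (PiM I P)"
  using measurable_component_singleton[OF assms(2), of P] measurable_cong_sets[OF refl assms(1)]
  by blast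

lemma post_reduce:
  fixes P :: "nat \<Rightarrow> real measure" and c \<theta> :: "nat \<Rightarrow> real"
  assumes Pp: "\<And>j. prob_space (P j)" and Ps: "\<And>j. sets (P j) = sets borel"
    and Pout: "\<And>j. j \<notin> {1..m} \<Longrightarrow> P j = return borel (c j)"
    and summ: "summable (\<lambda>j. (c (Suc j) - \<theta> (Suc j))\<^sup>2)"
    and T: "T = (\<Sum>n. (c (Suc (n+m)) - \<theta> (Suc (n+m)))\<^sup>2)"
  shows "measure (PiM UNIV P) {v \<in> space (PiM UNIV P). lo \<le> sqnorm (\<lambda>j. v j - \<theta> j) \<and> sqnorm (\<lambda>j. v j - \<theta> j) \<le> hi}
      = measure (PiM UNIV P) {v \<in> space (PiM UNIV P). lo \<le> (\<Sum>j\<in>{1..m}. (v j - \<theta> j)\<^sup>2) + T \<and> (\<Sum>j\<in>{1..m}. (v j - \<theta> j)\<^sup>2) + T \<le> hi}"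
    (is "?L = ?R")
   and "measure (PiM UNIV P) {v \<in> space (PiM UNIV P). lo \<le> (\<Sum>j\<in>{1..m}. (v j - \<theta> j)\<^sup>2) + T \<and> (\<Sum>j\<in>{1..m}. (v j - \<theta> j)\<^sup>2) + T \<le> hi}
      = measure (PiM {1..m} P) {x \<in> space (PiM {1..m} (\<lambda>_. borel)). lo \<le> (\<Sum>j\<in>{1..m}. (x j - \<theta> j)\<^sup>2) + T \<and> (\<Sum>j\<in>{1..m}. (x j - \<theta> j)\<^sup>2) + T \<le> hi}"
proof -
  interpret product_prob_space P UNIV by (simp add: Pp product_prob_spaceI)
  have cm[measurable]: "(\<lambda>v. v j) \<in> borel_measurable (PiM UNIV P)" for j
    by (rule comp_borel_meas[OF Ps]) simp
  have AE1: "AE v in PiM UNIV P. v j = c j" if "j \<notin> {1..m}" for j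
  proof (rule AE_component)
    show "AE x in P j. x = c j" unfolding Pout[OF that] by (subst AE_return) auto
  qed simp
  have AE: "AE v in PiM UNIV P. \<forall>j. j \<notin> {1..m} \<longrightarrow> v j = c j"
    unfolding AE_all_countable using AE1 by auto
  show "?L = ?R"
  proof (rule measure_eq_AE)
    show "AE x in PiM UNIV P. (x \<in> {v \<in> space (PiM UNIV P). lo \<le> sqnorm (\<lambda>j. v j - \<theta> j) \<and> sqnorm (\<lambda>j. v j - \<theta> j) \<le> hi}) =
       (x \<in> {v \<in> space (PiM UNIV P). lo \<le> (\<Sum>j\<in>{1..m}. (v j - \<theta> j)\<^sup>2) + T \<and> (\<Sum>j\<in>{1..m}. (v j - \<theta> j)\<^sup>2) + T \<le> hi})"
    proof (rule AE_mp[OF AE], intro AE_I2 impI)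
      fix v assume "\<forall>j. j \<notin> {1..m} \<longrightarrow> v j = c j"
      then have "sqnorm (\<lambda>j. v j - \<theta> j) = (\<Sum>j\<in>{1..m}. (v j - \<theta> j)\<^sup>2) + T"
        unfolding T by (intro sqnorm_split[OF summ]) auto
      then show "(v \<in> {v \<in> space (PiM UNIV P). lo \<le> sqnorm (\<lambda>j. v j - \<theta> j) \<and> sqnorm (\<lambda>j. v j - \<theta> j) \<le> hi}) =
       (v \<in> {v \<in> space (PiM UNIV P). lo \<le> (\<Sum>j\<in>{1..m}. (v j - \<theta> j)\<^sup>2) + T \<and> (\<Sum>j\<in>{1..m}. (v j - \<theta> j)\<^sup>2) + T \<le> hi})"
        by simp
    qed
  qed (unfold sqnorm_def, measurable, measurable)
  define A where "A = {x \<in> space (PiM {1..m} (\<lambda>_. borel)). lo \<le> (\<Sum>j\<in>{1..m}. (x j - \<theta> j)\<^sup>2) + T \<and> (\<Sum>j\<in>{1..m}. (x j - \<theta> j)\<^sup>2) + T \<le> hi}"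
  have sA: "sets (PiM {1..m} P) = sets (PiM {1..m} (\<lambda>_. borel))"
    by (intro sets_PiM_cong) (auto simp: Ps)
  have A: "A \<in> sets (PiM {1..m} P)" unfolding sA A_def by measurable
  have emb: "{v \<in> space (PiM UNIV P). lo \<le> (\<Sum>j\<in>{1..m}. (v j - \<theta> j)\<^sup>2) + T \<and> (\<Sum>j\<in>{1..m}. (v j - \<theta> j)\<^sup>2) + T \<le> hi}
      = prod_emb UNIV P {1..m} A"
    by (auto simp: prod_emb_def A_def space_PiM PiE_def Pi_def)
  show "measure (PiM UNIV P) {v \<in> space (PiM UNIV P). lo \<le> (\<Sum>j\<in>{1..m}. (v j - \<theta> j)\<^sup>2) + T \<and> (\<Sum>j\<in>{1..m}. (v j - \<theta> j)\<^sup>2) + T \<le> hi}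
      = measure (PiM {1..m} P) {x \<in> space (PiM {1..m} (\<lambda>_. borel)). lo \<le> (\<Sum>j\<in>{1..m}. (x j - \<theta> j)\<^sup>2) + T \<and> (\<Sum>j\<in>{1..m}. (x j - \<theta> j)\<^sup>2) + T \<le> hi}"
    unfolding emb A_def[symmetric] measure_def
    by (subst emeasure_PiM_emb'[OF _ _ A]) auto
qed

lemma post_cheb:
  fixes P :: "nat \<Rightarrow> real measure" and \<mu> s \<theta> :: "nat \<Rightarrow> real" and J :: "nat set"
  assumes Pp: "\<And>j. prob_space (P j)" and Ps: "\<And>j. sets (P j) = sets borel" and J: "finite J"
    and PJ: "\<And>j. j \<in> J \<Longrightarrow> P j = density lborel (normal_density (\<mu> j) (s j))"
    and s: "\<And>j. j \<in> J \<Longrightarrow> 0 < s j" and ellb: "\<And>j. j \<in> J \<Longrightarrow> (s j)\<^sup>2 \<le> ell"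
    and M0: "M0 = (\<Sum>j\<in>J. (s j)\<^sup>2 + (\<mu> j - \<theta> j)\<^sup>2)" and M0pos: "0 < M0"
    and T: "0 \<le> T" and lo: "lo \<le> M0/2" and hi: "M0 + T \<le> hi/2"
  shows "1 - 16*ell/M0 - 8*ell/hi \<le> measure (PiM UNIV P)
     {v \<in> space (PiM UNIV P). lo \<le> (\<Sum>j\<in>J. (v j - \<theta> j)\<^sup>2) + T \<and> (\<Sum>j\<in>J. (v j - \<theta> j)\<^sup>2) + T \<le> hi}"
proof -
  interpret product_prob_space P UNIV by (simp add: Pp product_prob_spaceI)
  have cm[measurable]: "(\<lambda>v. v j) \<in> borel_measurable (PiM UNIV P)" for j
    by (rule comp_borel_meas[OF Ps]) simp
  define f where "f j x = (1 * x + (- \<theta> j))\<^sup>2" for j x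
  have f_eq: "f j x = (x - \<theta> j)\<^sup>2" for j x unfolding f_def by simp
  have e: "integral\<^sup>L (P j) (f j) = (s j)\<^sup>2 + (\<mu> j - \<theta> j)\<^sup>2" if "j \<in> J" for j
    unfolding f_def PJ[OF that] normal_sq_moments(3)[OF s[OF that]] by simp
  have var: "integral\<^sup>L (P j) (\<lambda>x. (f j x - integral\<^sup>L (P j) (f j))\<^sup>2) = 2*(s j)^4 + 4*(s j)\<^sup>2*(\<mu> j - \<theta> j)\<^sup>2"
    if "j \<in> J" for j
    using normal_sq_moments(4)[OF s[OF that], of "\<mu> j" 1 "- \<theta> j"]
    unfolding e[OF that] unfolding f_def PJ[OF that] by simp
  have i1: "integrable (P j) (f j)" if "j \<in> J" for j
    unfolding f_def PJ[OF that] by (rule normal_sq_moments(1)[OF s[OF that]])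
  have i2: "integrable (P j) (\<lambda>x. (f j x)\<^sup>2)" if "j \<in> J" for j
    unfolding f_def PJ[OF that] by (rule normal_sq_moments(2)[OF s[OF that]])
  define V where "V = (\<Sum>j\<in>J. 2*(s j)^4 + 4*(s j)\<^sup>2*(\<mu> j - \<theta> j)\<^sup>2)"
  have ell0: "0 \<le> ell" if "J \<noteq> {}" using that ellb by (meson all_not_in_conv order_trans zero_le_power2)
  have Vle: "V \<le> 4 * ell * M0"
  proof -
    have "V \<le> (\<Sum>j\<in>J. 4 * ell * ((s j)\<^sup>2 + (\<mu> j - \<theta> j)\<^sup>2))"
      unfolding V_def
    proof (rule sum_mono)
      fix j assume j: "j \<in> J"
      have a: "(s j)^4 = (s j)\<^sup>2 * (s j)\<^sup>2" by algebra
      have b: "(s j)\<^sup>2 * (s j)\<^sup>2 \<le> ell * (s j)\<^sup>2" using ellb[OF j] by (intro mult_right_mono) auto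
      have c: "0 \<le> (s j)\<^sup>2 * (s j)\<^sup>2" by simp
      have "2*(s j)^4 \<le> 4 * ell * (s j)\<^sup>2" using a b c by linarith
      moreover have "4*(s j)\<^sup>2*(\<mu> j - \<theta> j)\<^sup>2 \<le> 4 * ell * (\<mu> j - \<theta> j)\<^sup>2"
        using ellb[OF j] by (simp add: mult_right_mono)
      ultimately show "2*(s j)^4 + 4*(s j)\<^sup>2*(\<mu> j - \<theta> j)\<^sup>2 \<le> 4 * ell * ((s j)\<^sup>2 + (\<mu> j - \<theta> j)\<^sup>2)"
        by (simp add: algebra_simps)
    qed
    also have "\<dots> = 4 * ell * M0" unfolding M0 by (simp add: sum_distrib_left)
    finally show ?thesis .
  qed
  have Jne: "J \<noteq> {}" using M0pos M0 by auto
  have hipos: "0 < hi" using hi M0pos T by linarith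
  define Q where "Q v = (\<Sum>j\<in>J. (v j - \<theta> j)\<^sup>2)" for v
  have Qeq: "(\<Sum>j\<in>J. f j (v j)) - (\<Sum>j\<in>J. integral\<^sup>L (P j) (f j)) = Q v - M0" for v
  proof -
    have "(\<Sum>j\<in>J. f j (v j)) = Q v" unfolding Q_def f_eq ..
    moreover have "(\<Sum>j\<in>J. integral\<^sup>L (P j) (f j)) = M0" unfolding M0 using e by (intro sum.cong) auto
    ultimately show ?thesis by simp
  qed
  have cheb: "measure (PiM UNIV P) {v \<in> space (PiM UNIV P). t \<le> \<bar>Q v - M0\<bar>} \<le> V / t\<^sup>2" if t: "0 < t" for t
  proof -
    have "measure (PiM UNIV P) {x \<in> space (PiM UNIV P).
      t \<le> \<bar>(\<Sum>i\<in>J. f i (x i)) - (\<Sum>i\<in>J. integral\<^sup>L (P i) (f i))\<bar>}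
    \<le> (\<Sum>i\<in>J. integral\<^sup>L (P i) (\<lambda>x. (f i x - integral\<^sup>L (P i) (f i))\<^sup>2)) / t\<^sup>2"
      by (rule PiM_UNIV_chebyshev[OF Pp J i1 i2 t])
    also have "(\<Sum>i\<in>J. integral\<^sup>L (P i) (\<lambda>x. (f i x - integral\<^sup>L (P i) (f i))\<^sup>2)) = V"
      unfolding V_def using var by simp
    finally show ?thesis unfolding Qeq .
  qed
  define E where "E = {v \<in> space (PiM UNIV P). lo \<le> Q v + T \<and> Q v + T \<le> hi}"
  define L where "L = {v \<in> space (PiM UNIV P). M0/2 \<le> \<bar>Q v - M0\<bar>}"
  define U where "U = {v \<in> space (PiM UNIV P). hi/2 \<le> \<bar>Q v - M0\<bar>}"
  have sets: "E \<in> sets (PiM UNIV P)" "L \<in> sets (PiM UNIV P)" "U \<in> sets (PiM UNIV P)"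
    unfolding E_def L_def U_def Q_def by measurable
  have sub: "space (PiM UNIV P) \<subseteq> E \<union> (L \<union> U)"
  proof
    fix v assume v: "v \<in> space (PiM UNIV P)"
    show "v \<in> E \<union> (L \<union> U)"
    proof (cases "Q v + T < lo")
      case True
      then have "M0/2 \<le> \<bar>Q v - M0\<bar>" using lo T by linarith
      then show ?thesis using v unfolding L_def by auto
    next
      case False
      show ?thesis
      proof (cases "hi < Q v + T")
        case True
        then have "hi/2 \<le> \<bar>Q v - M0\<bar>" using hi T by linarith
        then show ?thesis using v unfolding U_def by auto
      next
        case False2: False
        then show ?thesis using v False unfolding E_def by auto
      qed
    qed
  qed
  have "1 \<le> measure (PiM UNIV P) (E \<union> (L \<union> U))"
    using finite_measure_mono[OF sub] sets by (simp add: P.prob_space)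
  also have "\<dots> \<le> measure (PiM UNIV P) E + (measure (PiM UNIV P) L + measure (PiM UNIV P) U)"
    using sets by (intro order.trans[OF measure_Un_le] add_left_mono measure_Un_le) auto
  finally have main: "1 \<le> measure (PiM UNIV P) E + measure (PiM UNIV P) L + measure (PiM UNIV P) U" by simp
  have "measure (PiM UNIV P) L \<le> V / (M0/2)\<^sup>2" unfolding L_def using M0pos by (intro cheb) simp
  also have "\<dots> \<le> 4 * ell * M0 / (M0/2)\<^sup>2" using Vle M0pos by (intro divide_right_mono) auto
  also have "\<dots> = 16 * ell / M0" using M0pos by (simp add: power2_eq_square field_simps)
  finally have L: "measure (PiM UNIV P) L \<le> 16 * ell / M0" .
  have "measure (PiM UNIV P) U \<le> V / (hi/2)\<^sup>2" unfolding U_def using hipos by (intro cheb) simp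
  also have "\<dots> \<le> 4 * ell * (hi/2) / (hi/2)\<^sup>2"
    using Vle M0pos hi T ell0[OF Jne] hipos
    by (intro divide_right_mono order.trans[OF Vle] mult_left_mono) auto
  also have "\<dots> = 8 * ell / hi" using hipos by (simp add: power2_eq_square field_simps)
  finally have U: "measure (PiM UNIV P) U \<le> 8 * ell / hi" .
  show ?thesis using main L U unfolding E_def Q_def by linarith
qed

lemma data_cheb:
  fixes P :: "nat \<Rightarrow> real measure" and \<mu> s \<alpha> \<beta> :: "nat \<Rightarrow> real" and J :: "nat set"
  assumes Pp: "\<And>j. prob_space (P j)" and Ps: "\<And>j. sets (P j) = sets borel" and J: "finite J"
    and PJ: "\<And>j. j \<in> J \<Longrightarrow> P j = density lborel (normal_density (\<mu> j) (s j))"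
    and s: "\<And>j. j \<in> J \<Longrightarrow> 0 < s j" and ellb: "\<And>j. j \<in> J \<Longrightarrow> (\<alpha> j)\<^sup>2 * (s j)\<^sup>2 \<le> ell"
    and Eu: "Eu = (\<Sum>j\<in>J. (\<alpha> j)\<^sup>2 * (s j)\<^sup>2 + (\<alpha> j * \<mu> j + \<beta> j)\<^sup>2)"
    and t: "0 < t" and U0: "Eu + t \<le> U0"
  shows "measure (PiM UNIV P) {Y \<in> space (PiM UNIV P). U0 < (\<Sum>j\<in>J. (\<alpha> j * Y j + \<beta> j)\<^sup>2)} \<le> 4 * ell * Eu / t\<^sup>2"
proof -
  interpret product_prob_space P UNIV by (simp add: Pp product_prob_spaceI)
  have cm[measurable]: "(\<lambda>v. v j) \<in> borel_measurable (PiM UNIV P)" for j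
    by (rule comp_borel_meas[OF Ps]) simp
  define f where "f j x = (\<alpha> j * x + \<beta> j)\<^sup>2" for j x
  have e: "integral\<^sup>L (P j) (f j) = (\<alpha> j)\<^sup>2 * (s j)\<^sup>2 + (\<alpha> j * \<mu> j + \<beta> j)\<^sup>2" if "j \<in> J" for j
    unfolding f_def PJ[OF that] normal_sq_moments(3)[OF s[OF that]] by simp
  have var: "integral\<^sup>L (P j) (\<lambda>x. (f j x - integral\<^sup>L (P j) (f j))\<^sup>2)
      = 2*(\<alpha> j)^4*(s j)^4 + 4*(\<alpha> j)\<^sup>2*(s j)\<^sup>2*(\<alpha> j * \<mu> j + \<beta> j)\<^sup>2"
    if "j \<in> J" for j
    using normal_sq_moments(4)[OF s[OF that], of "\<mu> j" "\<alpha> j" "\<beta> j"]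
    unfolding e[OF that] unfolding f_def PJ[OF that] by simp
  have i1: "integrable (P j) (f j)" if "j \<in> J" for j
    unfolding f_def PJ[OF that] by (rule normal_sq_moments(1)[OF s[OF that]])
  have i2: "integrable (P j) (\<lambda>x. (f j x)\<^sup>2)" if "j \<in> J" for j
    unfolding f_def PJ[OF that] by (rule normal_sq_moments(2)[OF s[OF that]])
  define V where "V = (\<Sum>j\<in>J. 2*(\<alpha> j)^4*(s j)^4 + 4*(\<alpha> j)\<^sup>2*(s j)\<^sup>2*(\<alpha> j * \<mu> j + \<beta> j)\<^sup>2)"
  have Vle: "V \<le> 4 * ell * Eu"
  proof -
    have "V \<le> (\<Sum>j\<in>J. 4 * ell * ((\<alpha> j)\<^sup>2 * (s j)\<^sup>2 + (\<alpha> j * \<mu> j + \<beta> j)\<^sup>2))"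
      unfolding V_def
    proof (rule sum_mono)
      fix j assume j: "j \<in> J"
      define c where "c = (\<alpha> j)\<^sup>2 * (s j)\<^sup>2"
      define g where "g = (\<alpha> j * \<mu> j + \<beta> j)\<^sup>2"
      have a: "2*(\<alpha> j)^4*(s j)^4 + 4*(\<alpha> j)\<^sup>2*(s j)\<^sup>2*(\<alpha> j * \<mu> j + \<beta> j)\<^sup>2 = 2 * c * c + 4 * c * g"
        unfolding c_def g_def by algebra
      have c0: "0 \<le> c" "0 \<le> g" unfolding c_def g_def by auto
      have "c * c \<le> ell * c" "c * g \<le> ell * g" using ellb[OF j] c0 unfolding c_def[symmetric]
        by (auto intro: mult_right_mono)
      moreover have "0 \<le> c * c" by simp
      moreover have "4 * ell * (c + g) = 4 * (ell * c) + 4 * (ell * g)" "2 * c * c = 2 * (c * c)" "4 * c * g = 4 * (c * g)"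
        by (simp_all add: algebra_simps)
      ultimately have "2 * c * c + 4 * c * g \<le> 4 * ell * (c + g)" by linarith
      then show "2*(\<alpha> j)^4*(s j)^4 + 4*(\<alpha> j)\<^sup>2*(s j)\<^sup>2*(\<alpha> j * \<mu> j + \<beta> j)\<^sup>2 \<le> 4 * ell * ((\<alpha> j)\<^sup>2 * (s j)\<^sup>2 + (\<alpha> j * \<mu> j + \<beta> j)\<^sup>2)"
        unfolding a unfolding c_def g_def .
    qed
    also have "\<dots> = 4 * ell * Eu" unfolding Eu by (simp add: sum_distrib_left)
    finally show ?thesis .
  qed
  define u where "u Y = (\<Sum>j\<in>J. (\<alpha> j * Y j + \<beta> j)\<^sup>2)" for Y
  have ueq: "(\<Sum>j\<in>J. f j (v j)) - (\<Sum>j\<in>J. integral\<^sup>L (P j) (f j)) = u v - Eu" for v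
  proof -
    have "(\<Sum>j\<in>J. f j (v j)) = u v" unfolding u_def f_def ..
    moreover have "(\<Sum>j\<in>J. integral\<^sup>L (P j) (f j)) = Eu" unfolding Eu using e by (intro sum.cong) auto
    ultimately show ?thesis by simp
  qed
  have "measure (PiM UNIV P) {x \<in> space (PiM UNIV P).
      t \<le> \<bar>(\<Sum>i\<in>J. f i (x i)) - (\<Sum>i\<in>J. integral\<^sup>L (P i) (f i))\<bar>}
    \<le> (\<Sum>i\<in>J. integral\<^sup>L (P i) (\<lambda>x. (f i x - integral\<^sup>L (P i) (f i))\<^sup>2)) / t\<^sup>2"
    by (rule PiM_UNIV_chebyshev[OF Pp J i1 i2 t])
  also have "(\<Sum>i\<in>J. integral\<^sup>L (P i) (\<lambda>x. (f i x - integral\<^sup>L (P i) (f i))\<^sup>2)) = V"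
    unfolding V_def using var by simp
  finally have ch: "measure (PiM UNIV P) {x \<in> space (PiM UNIV P). t \<le> \<bar>u x - Eu\<bar>} \<le> V / t\<^sup>2"
    unfolding ueq .
  have "measure (PiM UNIV P) {Y \<in> space (PiM UNIV P). U0 < u Y}
      \<le> measure (PiM UNIV P) {x \<in> space (PiM UNIV P). t \<le> \<bar>u x - Eu\<bar>}"
    using U0 by (intro finite_measure_mono) (auto simp: u_def)
  also note ch
  also have "V / t\<^sup>2 \<le> 4 * ell * Eu / t\<^sup>2" using Vle by (intro divide_right_mono) auto
  finally show ?thesis unfolding u_def .
qed



lemma div_le_div_pos: "0 \<le> (c::real) \<Longrightarrow> 0 < b \<Longrightarrow> b \<le> a \<Longrightarrow> c / a \<le> c / b"
  by (rule divide_left_mono) (auto intro!: mult_pos_pos)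

context
  fixes lam eta a :: "nat \<Rightarrow> real"
    and tau :: "real \<Rightarrow> nat \<Rightarrow> real"
    and d r L eps_o :: real
  assumes lam_bdd: "\<exists>B. \<forall>j\<ge>1. \<bar>lam j\<bar> \<le> B"
    and lam_nz: "\<forall>j\<ge>1. lam j \<noteq> 0"
    and a_pos: "\<forall>j\<ge>1. 0 < a j"
    and a_mono: "\<forall>j k. 1 \<le> j \<and> j \<le> k \<longrightarrow> a k \<le> a j"
    and a_one: "a 1 = 1"
    and a_lim: "a \<longlonglongrightarrow> 0"
    and tau_pos: "\<forall>eps. 0 < eps \<and> eps < 1 \<longrightarrow> (\<forall>j\<ge>1. 0 < tau eps j)"
    and eps_o: "0 < eps_o" "eps_o < 1"
    and d_pos: "0 < d"
    and assmA: "\<forall>eps. 0 < eps \<and> eps < 1 \<longrightarrow>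
       (\<forall>j. 1 \<le> j \<and> j \<le> G_eps lam eps \<longrightarrow>
          d * max (sqrt eps * sqrt (Lam lam j)) (eps * Lam lam j) \<le> tau eps j)"
    and assmM: "0 < kappa_star a lam eps_o"
    and r_pos: "0 < r"
    and L_ge: "1 \<le> L"
    and L_bound: "\<forall>eps. 0 < eps \<and> eps < eps_o \<longrightarrow>
       eps * real (m_star a lam eps) * Lam_max lam (m_star a lam eps) / Phi_star a lam eps \<le> L"
begin

definition "BB = (SOME B. \<forall>j\<ge>1. \<bar>lam j\<bar> \<le> B)"

lemma BB: "\<forall>j\<ge>1. \<bar>lam j\<bar> \<le> BB" "0 < BB"
proof -
  show b: "\<forall>j\<ge>1. \<bar>lam j\<bar> \<le> BB" unfolding BB_def using lam_bdd by (rule someI_ex)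
  have "0 < \<bar>lam 1\<bar>" using lam_nz by auto
  then show "0 < BB" using b by fastforce
qed

lemma Lam_pos: "1 \<le> j \<Longrightarrow> 0 < Lam lam j"
  using lam_nz unfolding Lam_def by auto

lemma Lam_ge: "1 \<le> j \<Longrightarrow> 1 / BB\<^sup>2 \<le> Lam lam j"
proof -
  assume j: "1 \<le> j"
  have "0 < \<bar>lam j\<bar>" using lam_nz j by auto
  moreover have "\<bar>lam j\<bar> \<le> BB" using BB j by auto
  ultimately have "(lam j)\<^sup>2 \<le> BB\<^sup>2" by (metis abs_le_square_iff abs_of_pos BB(2))
  then show ?thesis unfolding Lam_def using \<open>0 < \<bar>lam j\<bar>\<close> BB(2)
    by (intro divide_left_mono) (auto intro!: mult_pos_pos)
qed

lemma sumLam: "1 \<le> k \<Longrightarrow> real k * Lam_bar lam k = (\<Sum>j=1..k. Lam lam j)"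
  unfolding Lam_bar_def by simp

lemma sumLam_ge: "real k / BB\<^sup>2 \<le> (\<Sum>j=1..k. Lam lam j)"
proof -
  have "(\<Sum>j=1..k. 1 / BB\<^sup>2) \<le> (\<Sum>j=1..k. Lam lam j)"
    by (intro sum_mono Lam_ge) auto
  then show ?thesis by simp
qed

lemma rate_ge: "0 < eps \<Longrightarrow> 1 \<le> k \<Longrightarrow> eps * real k / BB\<^sup>2 \<le> rate a lam eps k"
proof -
  assume e: "0 < eps" and k: "1 \<le> k"
  have "eps * real k / BB\<^sup>2 \<le> eps * (\<Sum>j=1..k. Lam lam j)"
    using sumLam_ge[of k] e by (simp add: mult_left_mono divide_inverse)
  also have "\<dots> = eps * real k * Lam_bar lam k" using sumLam[OF k] by simp
  also have "\<dots> \<le> rate a lam eps k" unfolding rate_def by simp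
  finally show ?thesis .
qed

lemma mstar: assumes e: "0 < eps"
  shows "1 \<le> m_star a lam eps" "\<And>k. 1 \<le> k \<Longrightarrow> rate a lam eps (m_star a lam eps) \<le> rate a lam eps k"
proof -
  define R where "R = rate a lam eps 1"
  define N where "N = nat \<lceil>R * BB\<^sup>2 / eps\<rceil> + 1"
  have N1: "1 \<le> N" unfolding N_def by simp
  define S where "S = {1..N}"
  have fS: "finite S" "S \<noteq> {}" unfolding S_def using N1 by auto
  have "Min (rate a lam eps ` S) \<in> rate a lam eps ` S" using fS by (intro Min_in) auto
  then obtain m0 where m0: "m0 \<in> S" "rate a lam eps m0 = Min (rate a lam eps ` S)"
    by (metis imageE)
  have inS: "rate a lam eps m0 \<le> rate a lam eps k" if "k \<in> S" for k
    using m0 fS that by simp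
  have ex: "\<exists>m. 1 \<le> m \<and> (\<forall>k\<ge>1. rate a lam eps m \<le> rate a lam eps k)"
  proof (intro exI conjI allI impI)
    show "1 \<le> m0" using m0 S_def by auto
    fix k :: nat assume k: "1 \<le> k"
    show "rate a lam eps m0 \<le> rate a lam eps k"
    proof (cases "k \<in> S")
      case True then show ?thesis by (rule inS)
    next
      case False
      then have kN: "real N < real k" using k unfolding S_def by auto
      have "R * BB\<^sup>2 / eps \<le> real N" unfolding N_def by linarith
      then have "R \<le> eps * real N / BB\<^sup>2" using e BB(2) by (simp add: field_simps)
      also have "\<dots> \<le> eps * real k / BB\<^sup>2" using kN e BB(2) by (intro divide_right_mono mult_left_mono) auto
      also have "\<dots> \<le> rate a lam eps k" by (rule rate_ge[OF e k])
      finally have "R \<le> rate a lam eps k" .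
      moreover have "rate a lam eps m0 \<le> R" unfolding R_def using inS N1 S_def by auto
      ultimately show ?thesis by linarith
    qed
  qed
  have "1 \<le> m_star a lam eps \<and> (\<forall>k\<ge>1. rate a lam eps (m_star a lam eps) \<le> rate a lam eps k)"
    unfolding m_star_def by (rule LeastI_ex[OF ex])
  then show "1 \<le> m_star a lam eps" "\<And>k. 1 \<le> k \<Longrightarrow> rate a lam eps (m_star a lam eps) \<le> rate a lam eps k"
    by auto
qed

lemma Phi_le: "0 < eps \<Longrightarrow> 1 \<le> k \<Longrightarrow> Phi_star a lam eps \<le> rate a lam eps k"
  unfolding Phi_star_def by (rule mstar(2))

lemma Phi_ge_a: "a (m_star a lam eps) \<le> Phi_star a lam eps"
  unfolding Phi_star_def rate_def by simp

lemma Phi_ge2: "eps * real (m_star a lam eps) * Lam_bar lam (m_star a lam eps) \<le> Phi_star a lam eps"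
  unfolding Phi_star_def rate_def by simp

lemma Phi_pos: "0 < eps \<Longrightarrow> 0 < Phi_star a lam eps"
  using Phi_ge_a[of eps] mstar(1)[of eps] a_pos by force

lemma Phi_tendsto: "((\<lambda>eps. Phi_star a lam eps) \<longlongrightarrow> 0) (at_right 0)"
proof (rule tendstoI)
  fix e :: real assume e: "0 < e"
  from a_lim e have "eventually (\<lambda>n. \<bar>a n\<bar> < e) sequentially"
    by (auto dest: tendstoD simp: dist_real_def)
  then obtain n0 where n0: "\<And>n. n \<ge> n0 \<Longrightarrow> \<bar>a n\<bar> < e" unfolding eventually_sequentially by auto
  define k where "k = max n0 1"
  have k: "1 \<le> k" "a k < e" using n0[of k] unfolding k_def by auto
  define c where "c = real k * Lam_bar lam k"
  have c0: "0 \<le> c" unfolding c_def sumLam[OF k(1)] by (intro sum_nonneg) (metis Lam_pos One_nat_def atLeastAtMost_iff less_imp_le)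
  have "eventually (\<lambda>eps. 0 < eps \<and> eps * c < e) (at_right (0::real))"
  proof -
    have "eventually (\<lambda>eps. eps \<in> {0<..<e / (c + 1)}) (at_right (0::real))"
      using e c0 by (intro eventually_at_right_real) auto
    then show ?thesis
    proof eventually_elim
      case (elim eps)
      then have "eps * c \<le> eps * (c + 1)" by auto
      also have "\<dots> < e" using elim c0 by (simp add: field_simps)
      finally show ?case using elim by auto
    qed
  qed
  then show "eventually (\<lambda>eps. dist (Phi_star a lam eps) 0 < e) (at_right 0)"
  proof eventually_elim
    case (elim eps)
    have "Phi_star a lam eps \<le> rate a lam eps k" using Phi_le elim k by auto
    also have "\<dots> < e" unfolding rate_def using k elim by (auto simp: c_def mult.assoc)
    finally show ?case using Phi_pos[of eps] elim by (simp add: dist_real_def)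
  qed
qed

lemma mstar_at_top: "filterlim (\<lambda>eps. m_star a lam eps) at_top (at_right 0)"
  unfolding filterlim_at_top
proof
  fix N :: nat
  define N' where "N' = max N 1"
  have aN: "0 < a N'" using a_pos N'_def by auto
  have "eventually (\<lambda>eps. Phi_star a lam eps < a N') (at_right 0)"
    using order_tendstoD(2)[OF Phi_tendsto aN] .
  moreover have "eventually (\<lambda>eps. 0 < eps) (at_right (0::real))" by (simp add: eventually_at_right_less)
  ultimately show "eventually (\<lambda>eps. N \<le> m_star a lam eps) (at_right 0)"
  proof eventually_elim
    case (elim eps)
    show ?case
    proof (rule ccontr)
      assume "\<not> N \<le> m_star a lam eps"
      then have "m_star a lam eps \<le> N'" unfolding N'_def by auto
      then have "a N' \<le> a (m_star a lam eps)" using a_mono mstar(1)[of eps] elim by auto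
      then show False using Phi_ge_a[of eps] elim by linarith
    qed
  qed
qed


lemma Lam_bar_nonneg: "0 \<le> Lam_bar lam k"
  unfolding Lam_bar_def
  by (intro divide_nonneg_nonneg sum_nonneg) (metis Lam_pos One_nat_def atLeastAtMost_iff less_imp_le, simp)

lemma kappa_props:
  assumes e: "0 < eps" "eps < eps_o"
  shows "kappa_star a lam eps_o * Phi_star a lam eps \<le> eps * real (m_star a lam eps) * Lam_bar lam (m_star a lam eps)"
    "kappa_star a lam eps_o \<le> 1"
proof -
  define f where "f eps = min (a (m_star a lam eps)) (eps * real (m_star a lam eps) * Lam_bar lam (m_star a lam eps))
       / Phi_star a lam eps" for eps
  have f0: "0 \<le> f x" if "x \<in> {0<..<eps_o}" for x
  proof -
    have "0 < Phi_star a lam x" using Phi_pos that by auto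
    moreover have "0 \<le> a (m_star a lam x)" using a_pos mstar(1)[of x] that by (auto intro: less_imp_le)
    moreover have "0 \<le> x * real (m_star a lam x) * Lam_bar lam (m_star a lam x)"
      using that Lam_bar_nonneg by (intro mult_nonneg_nonneg) auto
    ultimately show ?thesis unfolding f_def by auto
  qed
  have k: "kappa_star a lam eps_o \<le> f eps"
    unfolding kappa_star_def f_def[symmetric]
  proof (rule cINF_lower)
    show "bdd_below (f ` {0<..<eps_o})" by (rule bdd_belowI2[of _ 0]) (use f0 in auto)
  qed (use e in auto)
  have P: "0 < Phi_star a lam eps" using Phi_pos e by auto
  have m1: "min (a (m_star a lam eps)) (eps * real (m_star a lam eps) * Lam_bar lam (m_star a lam eps)) \<le> Phi_star a lam eps"
    unfolding Phi_star_def rate_def by simp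
  show "kappa_star a lam eps_o \<le> 1"
  proof -
    have "f eps \<le> 1" unfolding f_def using m1 P by (simp add: divide_le_eq_1)
    then show ?thesis using k by linarith
  qed
  have "kappa_star a lam eps_o * Phi_star a lam eps \<le> f eps * Phi_star a lam eps"
    using k P by (intro mult_right_mono) auto
  also have "\<dots> \<le> eps * real (m_star a lam eps) * Lam_bar lam (m_star a lam eps)"
    unfolding f_def using P by simp
  finally show "kappa_star a lam eps_o * Phi_star a lam eps \<le> eps * real (m_star a lam eps) * Lam_bar lam (m_star a lam eps)" .
qed

lemma Lam_le_max: "1 \<le> j \<Longrightarrow> j \<le> m \<Longrightarrow> Lam lam j \<le> Lam_max lam m"
  unfolding Lam_max_def by (intro Max_ge) auto

lemma ell_bound:
  assumes e: "0 < eps" "eps < eps_o"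
  shows "real (m_star a lam eps) * (eps * Lam_max lam (m_star a lam eps)) \<le> L * Phi_star a lam eps"
  using L_bound e Phi_pos[of eps] by (auto simp: field_simps)

lemma m_le_G:
  assumes e: "0 < eps" "eps < eps_o"
    and c1: "L * Phi_star a lam eps \<le> Lam lam 1" and c2: "BB\<^sup>2 * Phi_star a lam eps \<le> 1"
  shows "m_star a lam eps \<le> G_eps lam eps"
proof -
  let ?m = "m_star a lam eps"
  have m1: "1 \<le> ?m" using mstar(1) e by auto
  have l0: "0 \<le> eps * Lam_max lam ?m"
    using Lam_le_max[OF order.refl m1] Lam_pos[of 1] e by (auto intro: mult_nonneg_nonneg)
  have "1 \<le> real ?m" using m1 by simp
  from mult_right_mono[OF this l0]
  have "eps * Lam_max lam ?m \<le> real ?m * (eps * Lam_max lam ?m)" by simp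
  also have "\<dots> \<le> L * Phi_star a lam eps" by (rule ell_bound[OF e])
  finally have A: "eps * Lam_max lam ?m \<le> Lam lam 1" using c1 by linarith
  have "eps * real ?m / BB\<^sup>2 \<le> Phi_star a lam eps" using rate_ge[OF e(1) m1] unfolding Phi_star_def .
  then have "eps * real ?m \<le> BB\<^sup>2 * Phi_star a lam eps" using BB(2) by (simp add: field_simps)
  then have "eps * real ?m \<le> 1" using c2 by linarith
  then have "real ?m \<le> 1 / eps" using e by (simp add: field_simps)
  then have B: "?m \<le> nat \<lfloor>1 / eps\<rfloor>" by (simp add: le_nat_floor)
  have fin: "finite {m. 1 \<le> m \<and> m \<le> nat \<lfloor>1 / eps\<rfloor> \<and> eps * Lam_max lam m \<le> Lam lam 1}" by simp
  show ?thesis unfolding G_eps_def using m1 A B by (intro Max_ge[OF fin]) auto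
qed


lemma a_le1: "1 \<le> j \<Longrightarrow> a j \<le> 1"
  using a_mono a_one by (metis order_refl)

lemma theta_facts:
  assumes th: "\<theta> \<in> ellipsoid a eta r"
  shows "summable (\<lambda>j. (eta (Suc j) - \<theta> (Suc j))\<^sup>2)"
    "(\<Sum>j=1..m. (\<theta> j - eta j)\<^sup>2) \<le> r"
    "1 \<le> m \<Longrightarrow> 0 \<le> (\<Sum>n. (eta (Suc (n+m)) - \<theta> (Suc (n+m)))\<^sup>2)"
    "1 \<le> m \<Longrightarrow> (\<Sum>n. (eta (Suc (n+m)) - \<theta> (Suc (n+m)))\<^sup>2) \<le> r * a m"
proof -
  define g where "g j = (\<theta> (Suc j) - eta (Suc j))\<^sup>2 / a (Suc j)" for j
  define h where "h j = (eta (Suc j) - \<theta> (Suc j))\<^sup>2" for j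
  have sg: "summable g" and gr: "suminf g \<le> r" using th unfolding ellipsoid_def g_def by auto
  have g0: "0 \<le> g j" for j
  proof -
    have "0 < a (Suc j)" using a_pos by auto
    then show ?thesis unfolding g_def by simp
  qed
  have hg: "h j = a (Suc j) * g j" for j
  proof -
    have "0 < a (Suc j)" using a_pos by auto
    then show ?thesis unfolding g_def h_def by (simp add: power2_commute)
  qed
  have hle: "h j \<le> g j" for j
  proof -
    have "a (Suc j) * g j \<le> 1 * g j" using a_le1[of "Suc j"] g0[of j] by (intro mult_right_mono) auto
    then show ?thesis using hg by simp
  qed
  have h0: "0 \<le> h j" for j unfolding h_def by simp
  show sh: "summable (\<lambda>j. (eta (Suc j) - \<theta> (Suc j))\<^sup>2)"
    using summable_comparison_test'[OF sg, of 0 h] hle h0 unfolding h_def by auto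
  have "(\<Sum>j=1..m. (\<theta> j - eta j)\<^sup>2) = (\<Sum>j<m. h j)"
    unfolding h_def by (subst sum_bounds_lt_plus1[symmetric]) (simp add: power2_commute)
  also have "\<dots> \<le> (\<Sum>j<m. g j)" by (intro sum_mono hle)
  also have "\<dots> \<le> suminf g" by (intro sum_le_suminf sg) (auto simp: g0)
  finally show "(\<Sum>j=1..m. (\<theta> j - eta j)\<^sup>2) \<le> r" using gr by linarith
  have sh': "summable h" using sh unfolding h_def .
  have shm: "summable (\<lambda>n. h (n + m))" using sh' by (simp only: summable_iff_shift)
  have "0 \<le> (\<Sum>n. h (n + m))" by (intro suminf_nonneg[OF shm]) (simp add: h0)
  then show "1 \<le> m \<Longrightarrow> 0 \<le> (\<Sum>n. (eta (Suc (n+m)) - \<theta> (Suc (n+m)))\<^sup>2)"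
    unfolding h_def by simp
  assume m: "1 \<le> m"
  have sgm: "summable (\<lambda>n. g (n + m))" using sg by simp
  have "(\<Sum>n. (eta (Suc (n+m)) - \<theta> (Suc (n+m)))\<^sup>2) = (\<Sum>n. h (n + m))" unfolding h_def ..
  also have "\<dots> \<le> (\<Sum>n. a m * g (n + m))"
  proof (rule suminf_le)
    fix n show "h (n + m) \<le> a m * g (n + m)"
      unfolding hg using a_mono m g0 by (intro mult_right_mono) auto
  qed (use shm sgm in auto)
  also have "\<dots> = a m * (\<Sum>n. g (n + m))" by (rule suminf_mult[OF sgm])
  also have "(\<Sum>n. g (n + m)) \<le> suminf g"
    using suminf_split_initial_segment[OF sg, of m] g0 by (simp add: sum_nonneg)
  then have "a m * (\<Sum>n. g (n + m)) \<le> a m * r" using gr a_pos m by (intro mult_left_mono) auto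
  finally show "(\<Sum>n. (eta (Suc (n+m)) - \<theta> (Suc (n+m)))\<^sup>2) \<le> r * a m" by (simp add: mult.commute)
qed

lemma sigma_facts:
  assumes e: "0 < eps" "eps < 1" and j: "1 \<le> j"
  shows "0 < post_var lam tau eps j" "post_var lam tau eps j \<le> eps * Lam lam j"
    "post_var lam tau eps j * (lam j)\<^sup>2 / eps \<le> 1"
    "d * eps * Lam lam j \<le> tau eps j \<Longrightarrow> d / (1 + d) * (eps * Lam lam j) \<le> post_var lam tau eps j"
    "d * (sqrt eps * sqrt (Lam lam j)) \<le> tau eps j \<Longrightarrow> (post_var lam tau eps j / tau eps j)\<^sup>2 \<le> eps * Lam lam j / d\<^sup>2"
proof -
  define l where "l = (lam j)\<^sup>2"
  define t where "t = tau eps j"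
  have l: "0 < l" unfolding l_def using lam_nz j by auto
  have t: "0 < t" unfolding t_def using tau_pos e j by auto
  have sv: "post_var lam tau eps j = 1 / (l / eps + 1 / t)" unfolding post_var_def l_def t_def ..
  have L: "Lam lam j = 1 / l" unfolding Lam_def l_def ..
  have D: "0 < l / eps + 1 / t" using l t e by (auto intro: add_pos_pos)
  show "0 < post_var lam tau eps j" unfolding sv using D by simp
  have "l / eps \<le> l / eps + 1 / t" using t by simp
  then have "1 / (l / eps + 1 / t) \<le> 1 / (l / eps)" using l e D by (intro divide_left_mono) (auto intro!: mult_pos_pos)
  then show "post_var lam tau eps j \<le> eps * Lam lam j" unfolding sv L by simp
  have "(l / eps) / (l / eps + 1 / t) \<le> 1"
  proof -
    have "l / eps \<le> l / eps + 1 / t" using t by simp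
    then show ?thesis by (subst divide_le_eq_1_pos[OF D])
  qed
  then show "post_var lam tau eps j * (lam j)\<^sup>2 / eps \<le> 1" unfolding sv l_def[symmetric] by (simp add: field_simps)
  show "d * eps * Lam lam j \<le> tau eps j \<Longrightarrow> d / (1 + d) * (eps * Lam lam j) \<le> post_var lam tau eps j"
  proof -
    assume A: "d * eps * Lam lam j \<le> tau eps j"
    have pos: "0 < d * eps / l" using d_pos e l by simp
    have "d * eps / l \<le> t" using A unfolding t_def[symmetric] L by (simp add: field_simps)
    moreover have tp: "0 < t * (d * eps / l)" using t pos by (rule mult_pos_pos)
    ultimately have "1 / t \<le> 1 / (d * eps / l)" by (intro divide_left_mono) auto
    moreover have "1 / (d * eps / l) = l / (d * eps)" by simp
    moreover have "(l / eps) * ((1 + d) / d) = l / eps + l / (d * eps)" using d_pos e by (simp add: field_simps)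
    ultimately have "l / eps + 1 / t \<le> (l / eps) * ((1 + d) / d)" by linarith
    moreover have "0 < (l / eps) * ((1 + d) / d) * (l / eps + 1 / t)"
      using D l e d_pos by (intro mult_pos_pos divide_pos_pos) auto
    ultimately have "1 / ((l / eps) * ((1 + d) / d)) \<le> 1 / (l / eps + 1 / t)" by (intro divide_left_mono) auto
    then show ?thesis unfolding sv L using d_pos e l by (simp add: field_simps)
  qed
  show "d * (sqrt eps * sqrt (Lam lam j)) \<le> tau eps j \<Longrightarrow> (post_var lam tau eps j / tau eps j)\<^sup>2 \<le> eps * Lam lam j / d\<^sup>2"
  proof -
    assume A: "d * (sqrt eps * sqrt (Lam lam j)) \<le> tau eps j"
    define q where "q = sqrt eps * sqrt (Lam lam j)"
    have q: "0 < q" "q\<^sup>2 = eps * Lam lam j" unfolding q_def L using e l by (auto simp: real_sqrt_mult[symmetric])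
    have pv0: "0 \<le> post_var lam tau eps j" using \<open>0 < post_var lam tau eps j\<close> by simp
    have "post_var lam tau eps j / tau eps j \<le> q\<^sup>2 / (d * q)"
      using \<open>post_var lam tau eps j \<le> eps * Lam lam j\<close> A q d_pos pv0
      by (intro frac_le) (auto simp: q_def[symmetric])
    also have "\<dots> = q / d" using q(1) d_pos by (simp add: power2_eq_square)
    finally have "(post_var lam tau eps j / tau eps j)\<^sup>2 \<le> (q / d)\<^sup>2"
      using pv0 t unfolding t_def by (intro power_mono) auto
    then show ?thesis using q d_pos by (simp add: power_divide)
  qed
qed


lemma core:
  fixes eps :: real and \<theta> :: "nat \<Rightarrow> real" and K :: real
  assumes e: "0 < eps" "eps < eps_o"
    and c1: "L * Phi_star a lam eps \<le> Lam lam 1"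
    and c2: "BB\<^sup>2 * Phi_star a lam eps \<le> 1"
    and c3: "r * L \<le> d\<^sup>2 * real (m_star a lam eps)"
    and th: "\<theta> \<in> ellipsoid a eta r"
    and K: "K = 10 * max (1 + 1 / d) (r / d\<^sup>2) * max 1 r * (L / kappa_star a lam eps_o)"
  shows "1 - (16*L*(1+d)/(d*kappa_star a lam eps_o) + 16*L) / real (m_star a lam eps) \<le>
     integral\<^sup>L (data_law lam eps \<theta>) (\<lambda>Y. measure (posterior lam eta tau eps (m_star a lam eps) Y)
             {v \<in> space (posterior lam eta tau eps (m_star a lam eps) Y).
                Phi_star a lam eps / K \<le> sqnorm (\<lambda>j. v j - \<theta> j) \<and> sqnorm (\<lambda>j. v j - \<theta> j) \<le> K * Phi_star a lam eps})"
proof -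
  define m where "m = m_star a lam eps"
  define \<Phi> where "\<Phi> = Phi_star a lam eps"
  define \<kappa> where "\<kappa> = kappa_star a lam eps_o"
  define J where "J = {1..m}"
  define ell where "ell = eps * Lam_max lam m"
  define \<sigma> where "\<sigma> j = post_var lam tau eps j" for j
  define S\<sigma> where "S\<sigma> = (\<Sum>j\<in>J. \<sigma> j)"
  define T where "T = (\<Sum>n. (eta (Suc (n+m)) - \<theta> (Suc (n+m)))\<^sup>2)"
  define U0 where "U0 = 3 * max 1 r * \<Phi>"
  have e1: "eps < 1" using e eps_o by linarith
  have m1: "1 \<le> m" unfolding m_def using mstar(1) e by auto
  have mpos: "0 < real m" using m1 by simp
  have Phipos: "0 < \<Phi>" unfolding \<Phi>_def using Phi_pos e by auto
  have kpos: "0 < \<kappa>" unfolding \<kappa>_def by (rule assmM)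
  have kle: "\<kappa> \<le> 1" unfolding \<kappa>_def using kappa_props(2)[OF e] .
  have kPhi: "\<kappa> * \<Phi> \<le> eps * real m * Lam_bar lam m" unfolding \<kappa>_def \<Phi>_def m_def using kappa_props(1)[OF e] .
  have mG: "m \<le> G_eps lam eps" unfolding m_def by (rule m_le_G[OF e c1 c2])
  have tauA: "d * (sqrt eps * sqrt (Lam lam j)) \<le> tau eps j" "d * eps * Lam lam j \<le> tau eps j" if "j \<in> J" for j
  proof -
    have "d * max (sqrt eps * sqrt (Lam lam j)) (eps * Lam lam j) \<le> tau eps j"
      using assmA e e1 that mG unfolding J_def by auto
    moreover have "d * (sqrt eps * sqrt (Lam lam j)) \<le> d * max (sqrt eps * sqrt (Lam lam j)) (eps * Lam lam j)"
      "d * (eps * Lam lam j) \<le> d * max (sqrt eps * sqrt (Lam lam j)) (eps * Lam lam j)"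
      using d_pos by (auto intro!: mult_left_mono)
    ultimately show "d * (sqrt eps * sqrt (Lam lam j)) \<le> tau eps j" "d * eps * Lam lam j \<le> tau eps j"
      by (auto simp: mult.assoc)
  qed
  have J1: "1 \<le> j" if "j \<in> J" for j using that unfolding J_def by auto
  have sig: "0 < \<sigma> j" "\<sigma> j \<le> eps * Lam lam j" "\<sigma> j * (lam j)\<^sup>2 / eps \<le> 1"
      "d / (1 + d) * (eps * Lam lam j) \<le> \<sigma> j" "(\<sigma> j / tau eps j)\<^sup>2 \<le> eps * Lam lam j / d\<^sup>2"
    if j: "j \<in> J" for j
    unfolding \<sigma>_def using sigma_facts[OF e(1) e1 J1[OF j]] tauA[OF j] by auto
  have ellj: "eps * Lam lam j \<le> ell" if j: "j \<in> J" for j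
    unfolding ell_def using Lam_le_max[of j m] j e unfolding J_def by (auto intro: mult_left_mono)
  have mell: "real m * ell \<le> L * \<Phi>" unfolding m_def ell_def \<Phi>_def by (rule ell_bound[OF e])
  have sumLamJ: "eps * real m * Lam_bar lam m = (\<Sum>j\<in>J. eps * Lam lam j)"
    unfolding J_def using sumLam[OF m1] by (simp add: sum_distrib_left mult.assoc)
  have SsPhi: "S\<sigma> \<le> \<Phi>"
  proof -
    have "S\<sigma> \<le> (\<Sum>j\<in>J. eps * Lam lam j)" unfolding S\<sigma>_def using sig(2) by (intro sum_mono) auto
    also have "\<dots> = eps * real m * Lam_bar lam m" using sumLamJ ..
    also have "\<dots> \<le> \<Phi>" unfolding \<Phi>_def m_def by (rule Phi_ge2)
    finally show ?thesis .
  qed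
  have Sslow: "d / (1 + d) * (\<kappa> * \<Phi>) \<le> S\<sigma>"
  proof -
    have "d / (1 + d) * (\<kappa> * \<Phi>) \<le> d / (1 + d) * (eps * real m * Lam_bar lam m)"
      using kPhi d_pos by (intro mult_left_mono) auto
    also have "\<dots> = (\<Sum>j\<in>J. d / (1 + d) * (eps * Lam lam j))" unfolding sumLamJ by (simp add: sum_distrib_left)
    also have "\<dots> \<le> S\<sigma>" unfolding S\<sigma>_def using sig(4) by (intro sum_mono) auto
    finally show ?thesis .
  qed
  have Sspos: "0 < S\<sigma>" using Sslow d_pos kpos Phipos
    by (smt (verit, best) divide_pos_pos mult_pos_pos)
  have T0: "0 \<le> T" unfolding T_def using theta_facts(3)[OF th m1] .
  have TPhi: "T \<le> r * \<Phi>"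
  proof -
    have "T \<le> r * a m" unfolding T_def using theta_facts(4)[OF th m1] .
    also have "\<dots> \<le> r * \<Phi>" using Phi_ge_a[of eps] r_pos unfolding \<Phi>_def m_def by (intro mult_left_mono) auto
    finally show ?thesis .
  qed
  have thsum: "(\<Sum>j\<in>J. (\<theta> j - eta j)\<^sup>2) \<le> r" unfolding J_def using theta_facts(2)[OF th] .
  have ell0: "0 \<le> ell" using ellj[of 1] sig(1)[of 1] sig(2)[of 1] m1 unfolding J_def by auto
  have rell: "r * ell \<le> d\<^sup>2 * \<Phi>"
  proof -
    have "real m * (r * ell) = r * (real m * ell)" by simp
    also have "\<dots> \<le> r * (L * \<Phi>)" using mell r_pos by (intro mult_left_mono) auto
    also have "\<dots> = (r * L) * \<Phi>" by simp
    also have "\<dots> \<le> (d\<^sup>2 * real m) * \<Phi>" using c3 Phipos unfolding m_def by (intro mult_right_mono) auto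
    finally have "real m * (r * ell) \<le> real m * (d\<^sup>2 * \<Phi>)" by (simp add: ac_simps)
    then show ?thesis using mpos by simp
  qed
  define b where "b j = \<sigma> j * (eta j - \<theta> j) / tau eps j" for j
  have bias: "(\<Sum>j\<in>J. (b j)\<^sup>2) \<le> \<Phi>"
  proof -
    have "(\<Sum>j\<in>J. (b j)\<^sup>2) \<le> (\<Sum>j\<in>J. ell / d\<^sup>2 * (\<theta> j - eta j)\<^sup>2)"
    proof (rule sum_mono)
      fix j assume j: "j \<in> J"
      have "(b j)\<^sup>2 = (\<sigma> j / tau eps j)\<^sup>2 * (\<theta> j - eta j)\<^sup>2"
        unfolding b_def by (simp add: power2_eq_square field_simps)
      also have "\<dots> \<le> ell / d\<^sup>2 * (\<theta> j - eta j)\<^sup>2"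
        using sig(5)[OF j] ellj[OF j] d_pos
        by (intro mult_right_mono order.trans[OF sig(5)[OF j]] divide_right_mono) auto
      finally show "(b j)\<^sup>2 \<le> ell / d\<^sup>2 * (\<theta> j - eta j)\<^sup>2" .
    qed
    also have "\<dots> = ell / d\<^sup>2 * (\<Sum>j\<in>J. (\<theta> j - eta j)\<^sup>2)" by (simp add: sum_distrib_left)
    also have "\<dots> \<le> ell / d\<^sup>2 * r" using thsum ell0 d_pos by (intro mult_left_mono) auto
    also have "\<dots> \<le> \<Phi>" using rell d_pos by (simp add: field_simps)
    finally show ?thesis .
  qed
  have Kge: "10 * (1 + 1 / d) * max 1 r * (L / \<kappa>) \<le> K"
  proof -
    have "10 * (1 + 1 / d) \<le> 10 * max (1 + 1 / d) (r / d\<^sup>2)"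
      by (intro mult_left_mono max.cobounded1) simp
    then have "10 * (1 + 1 / d) * max 1 r \<le> 10 * max (1 + 1 / d) (r / d\<^sup>2) * max 1 r"
      by (intro mult_right_mono) auto
    then have "10 * (1 + 1 / d) * max 1 r * (L / \<kappa>) \<le> 10 * max (1 + 1 / d) (r / d\<^sup>2) * max 1 r * (L / \<kappa>)"
      by (rule mult_right_mono) (use kpos L_ge in auto)
    then show ?thesis unfolding K \<kappa>_def[symmetric] .
  qed
  have Lk: "1 \<le> L / \<kappa>" using L_ge kle kpos by (simp add: field_simps)
  have Kpos: "0 < K" using Kge d_pos Lk by (smt (verit) divide_pos_pos max.cobounded1 mult_nonneg_nonneg zero_less_mult_iff)
  have K1: "10 * max 1 r \<le> K"
  proof -
    have "10 * max 1 r * 1 * 1 \<le> 10 * max 1 r * (1 + 1 / d) * (L / \<kappa>)"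
      using d_pos Lk by (intro mult_mono) auto
    then show ?thesis using Kge by (simp add: ac_simps)
  qed
  have lo: "\<Phi> / K \<le> S\<sigma> / 10"
  proof -
    have "10 * ((1 + d) / d) * (1 / \<kappa>) \<le> K"
    proof -
      have "10 * ((1 + d) / d) * (1 / \<kappa>) * 1 * 1 \<le> 10 * (1 + 1 / d) * (1 / \<kappa>) * max 1 r * L"
        using d_pos kpos L_ge by (intro mult_mono) (auto simp: field_simps)
      then show ?thesis using Kge by (simp add: field_simps)
    qed
    then have "\<Phi> / K \<le> \<Phi> / (10 * ((1 + d) / d) * (1 / \<kappa>))"
      using Phipos d_pos kpos by (intro div_le_div_pos) auto
    also have "\<dots> = (d / (1 + d) * (\<kappa> * \<Phi>)) / 10" using d_pos kpos by (simp add: field_simps)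
    also have "\<dots> \<le> S\<sigma> / 10" by (rule divide_right_mono[OF Sslow]) simp
    finally show ?thesis .
  qed
  have hi: "S\<sigma> + U0 + T \<le> K * \<Phi> / 2"
  proof -
    have "S\<sigma> + U0 + T \<le> \<Phi> + 3 * max 1 r * \<Phi> + r * \<Phi>" unfolding U0_def using SsPhi TPhi by linarith
    also have "\<dots> \<le> 5 * max 1 r * \<Phi>"
    proof -
      have "1 * \<Phi> \<le> max 1 r * \<Phi>" "r * \<Phi> \<le> max 1 r * \<Phi>" using Phipos by (intro mult_right_mono; simp)+
      then show ?thesis by linarith
    qed
    also have "\<dots> \<le> K * \<Phi> / 2"
    proof -
      have "(10 * max 1 r) * \<Phi> \<le> K * \<Phi>" using K1 Phipos by (intro mult_right_mono) auto
      then show ?thesis by linarith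
    qed
    finally show ?thesis .
  qed
  define Dc where "Dc j = density lborel (normal_density (lam j * \<theta> j) (sqrt eps))" for j
  have Deq: "data_law lam eps \<theta> = PiM UNIV Dc" unfolding data_law_def Dc_def[abs_def] ..
  have Dcp: "prob_space (Dc j)" for j unfolding Dc_def using e by (intro prob_space_normal_density) auto
  have Dcs: "sets (Dc j) = sets borel" for j unfolding Dc_def by simp
  interpret D: prob_space "PiM UNIV Dc" by (intro prob_space_PiM Dcp)
  have Dcm[measurable]: "(\<lambda>Y. Y j) \<in> borel_measurable (PiM UNIV Dc)" for j
    by (rule comp_borel_meas[OF Dcs]) simp
  define pm where "pm Y j = post_mean lam eta tau eps Y j" for Y j
  define P where "P Y j = (if 1 \<le> j \<and> j \<le> m then density lborel (normal_density (pm Y j) (sqrt (\<sigma> j)))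
      else return borel (eta j))" for Y j
  have post: "posterior lam eta tau eps m Y = PiM UNIV (P Y)" for Y
    unfolding posterior_def P_def pm_def \<sigma>_def ..
  have sq: "0 < sqrt (\<sigma> j)" if "j \<in> J" for j using sig(1)[OF that] by simp
  have Pp: "prob_space (P Y j)" for Y j
  proof (cases "j \<in> J")
    case True then show ?thesis unfolding P_def J_def using sq[OF True]
      by (auto intro!: prob_space_normal_density simp: J_def)
  next
    case False then show ?thesis unfolding P_def J_def by (auto intro!: prob_space_return)
  qed
  have Ps: "sets (P Y j) = sets borel" for Y j unfolding P_def by simp
  have summ: "summable (\<lambda>j. (eta (Suc j) - \<theta> (Suc j))\<^sup>2)" by (rule theta_facts(1)[OF th])
  define g where "g Y = measure (posterior lam eta tau eps m Y)
             {v \<in> space (posterior lam eta tau eps m Y).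
                \<Phi> / K \<le> sqnorm (\<lambda>j. v j - \<theta> j) \<and> sqnorm (\<lambda>j. v j - \<theta> j) \<le> K * \<Phi>}" for Y
  define A where "A = {x \<in> space (PiM J (\<lambda>_. borel)). \<Phi> / K \<le> (\<Sum>j\<in>J. (x j - \<theta> j)\<^sup>2) + T \<and> (\<Sum>j\<in>J. (x j - \<theta> j)\<^sup>2) + T \<le> K * \<Phi>}"
  define s' where "s' j = (if j \<in> J then sqrt (\<sigma> j) else 1)" for j
  have s'pos: "0 < s' j" for j unfolding s'_def using sq by auto
  have geq1: "g Y = measure (PiM UNIV (P Y)) {v \<in> space (PiM UNIV (P Y)).
       \<Phi> / K \<le> (\<Sum>j\<in>J. (v j - \<theta> j)\<^sup>2) + T \<and> (\<Sum>j\<in>J. (v j - \<theta> j)\<^sup>2) + T \<le> K * \<Phi>}" for Y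
    unfolding g_def post J_def
    by (rule post_reduce(1)[OF Pp Ps _ summ T_def]) (auto simp: P_def)
  have geq2: "g Y = measure (PiM J (\<lambda>j. density lborel (normal_density (pm Y j) (s' j)))) A" for Y
  proof -
    have "g Y = measure (PiM J (P Y)) A"
      unfolding geq1 A_def J_def
      by (rule post_reduce(2)[OF Pp Ps _ summ T_def]) (auto simp: P_def)
    also have "PiM J (P Y) = PiM J (\<lambda>j. density lborel (normal_density (pm Y j) (s' j)))"
      by (intro PiM_cong) (auto simp: P_def s'_def J_def)
    finally show ?thesis .
  qed
  have Ameas: "A \<in> sets (PiM J (\<lambda>_. borel))" unfolding A_def by measurable
  have pmm: "(\<lambda>Y. pm Y j) \<in> borel_measurable (PiM UNIV Dc)" for j
    unfolding pm_def post_mean_def by measurable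
  have gmeas: "g \<in> borel_measurable (PiM UNIV Dc)"
  proof -
    have "(\<lambda>Y. measure (PiM J (\<lambda>j. density lborel (normal_density (pm Y j) (s' j)))) A) \<in> borel_measurable (PiM UNIV Dc)"
      by (rule measurable_PiM_normal_measure[OF _ s'pos Ameas pmm]) (simp add: J_def)
    then show ?thesis unfolding geq2[abs_def] .
  qed
  have g01: "0 \<le> g Y" "g Y \<le> 1" for Y
  proof -
    interpret Pr: prob_space "PiM UNIV (P Y)" by (intro prob_space_PiM Pp)
    show "0 \<le> g Y" "g Y \<le> 1" unfolding geq1 by auto
  qed
  have gint: "integrable (PiM UNIV Dc) g"
    by (rule D.integrable_const_bound[where B=1]) (use g01 gmeas in auto)
  define u where "u Y = (\<Sum>j\<in>J. (pm Y j - \<theta> j)\<^sup>2)" for Y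
  define aa where "aa = 16*L*(1+d)/(d*\<kappa>) / real m + 8 * L / real m"
  have ell_le: "ell \<le> L * \<Phi> / real m" using mell mpos by (simp add: field_simps)
  have point: "1 - aa \<le> g Y" if uY: "u Y \<le> U0" for Y
  proof -
    have M0pos: "0 < S\<sigma> + u Y" using Sspos unfolding u_def by (smt (verit) sum_nonneg zero_le_power2)
    have u0: "0 \<le> u Y" unfolding u_def by (simp add: sum_nonneg)
    have "1 - 16*ell/(S\<sigma> + u Y) - 8*ell/(K*\<Phi>) \<le> measure (PiM UNIV (P Y))
     {v \<in> space (PiM UNIV (P Y)). \<Phi>/K \<le> (\<Sum>j\<in>J. (v j - \<theta> j)\<^sup>2) + T \<and> (\<Sum>j\<in>J. (v j - \<theta> j)\<^sup>2) + T \<le> K*\<Phi>}"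
    proof (rule post_cheb[where \<mu>="pm Y" and s="\<lambda>j. sqrt (\<sigma> j)", OF Pp Ps])
      show "finite J" unfolding J_def by simp
      show "P Y j = density lborel (normal_density (pm Y j) (sqrt (\<sigma> j)))" if "j \<in> J" for j
        using that unfolding P_def J_def by auto
      show "0 < sqrt (\<sigma> j)" if "j \<in> J" for j using sq[OF that] .
      show "(sqrt (\<sigma> j))\<^sup>2 \<le> ell" if "j \<in> J" for j
        using sig(1,2)[OF that] ellj[OF that] by simp
      show "S\<sigma> + u Y = (\<Sum>j\<in>J. (sqrt (\<sigma> j))\<^sup>2 + (pm Y j - \<theta> j)\<^sup>2)"
        unfolding S\<sigma>_def u_def using sig(1) by (simp add: sum.distrib less_imp_le)
      show "0 < S\<sigma> + u Y" by (rule M0pos)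
      show "0 \<le> T" by (rule T0)
      have "S\<sigma> / 10 \<le> (S\<sigma> + u Y) / 2" using Sspos u0 by (simp add: field_simps)
      then show "\<Phi> / K \<le> (S\<sigma> + u Y) / 2" using lo by linarith
      show "S\<sigma> + u Y + T \<le> K * \<Phi> / 2" using hi uY by linarith
    qed
    then have gl: "1 - 16*ell/(S\<sigma> + u Y) - 8*ell/(K*\<Phi>) \<le> g Y" unfolding geq1 .
    have t1: "16*ell/(S\<sigma> + u Y) \<le> 16*L*(1+d)/(d*\<kappa>) / real m"
    proof -
      have "16*ell/(S\<sigma> + u Y) \<le> 16*(L * \<Phi> / real m) / (d / (1 + d) * (\<kappa> * \<Phi>))"
        using ell_le ell0 Sslow u0 d_pos kpos Phipos
        by (intro frac_le) (auto intro!: mult_pos_pos divide_pos_pos)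
      also have "\<dots> = 16*L*(1+d)/(d*\<kappa>) / real m" using Phipos d_pos kpos mpos by (simp add: field_simps)
      finally show ?thesis .
    qed
    have t2: "8*ell/(K*\<Phi>) \<le> 8 * L / real m"
    proof -
      have "8*ell/(K*\<Phi>) \<le> 8*(L * \<Phi> / real m) / (1 * \<Phi>)"
        using ell_le ell0 K1 Phipos by (intro frac_le mult_right_mono) auto
      also have "\<dots> = 8 * L / real m" using Phipos by simp
      finally show ?thesis .
    qed
    show ?thesis using gl t1 t2 unfolding aa_def by linarith
  qed
  define \<alpha> where "\<alpha> j = \<sigma> j * lam j / eps" for j
  define \<beta> where "\<beta> j = \<sigma> j * eta j / tau eps j - \<theta> j" for j
  have ueq: "u Y = (\<Sum>j\<in>J. (\<alpha> j * Y j + \<beta> j)\<^sup>2)" for Y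
    unfolding u_def pm_def post_mean_def \<alpha>_def \<beta>_def \<sigma>_def
    by (intro sum.cong refl arg_cong[where f="\<lambda>x. x\<^sup>2"]) (simp add: field_simps)
  have abj: "\<alpha> j * (lam j * \<theta> j) + \<beta> j = b j" if j: "j \<in> J" for j
  proof -
    have t: "0 < tau eps j" using tau_pos e e1 J1[OF j] by auto
    have l: "lam j \<noteq> 0" using lam_nz J1[OF j] by auto
    have one: "\<sigma> j * ((lam j)\<^sup>2 / eps + 1 / tau eps j) = 1"
    proof -
      have "0 < (lam j)\<^sup>2 / eps + 1 / tau eps j" using t l e by (intro add_pos_pos) auto
      then show ?thesis unfolding \<sigma>_def post_var_def by simp
    qed
    have e3: "\<sigma> j * (lam j)\<^sup>2 / eps = 1 - \<sigma> j / tau eps j"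
      using one by (simp add: distrib_left)
    have e1: "\<alpha> j * (lam j * \<theta> j) = \<theta> j * (\<sigma> j * (lam j)\<^sup>2 / eps)"
      unfolding \<alpha>_def by (simp add: power2_eq_square)
    have "\<alpha> j * (lam j * \<theta> j) + \<beta> j = \<theta> j * (1 - \<sigma> j / tau eps j) + (\<sigma> j * eta j / tau eps j - \<theta> j)"
      unfolding e1 e3 \<beta>_def ..
    also have "\<dots> = b j" unfolding b_def using t by (simp add: field_simps)
    finally show ?thesis .
  qed
  define Eu where "Eu = (\<Sum>j\<in>J. (\<alpha> j)\<^sup>2 * (sqrt eps)\<^sup>2 + (\<alpha> j * (lam j * \<theta> j) + \<beta> j)\<^sup>2)"
  have aeps: "(\<alpha> j)\<^sup>2 * (sqrt eps)\<^sup>2 \<le> \<sigma> j" if j: "j \<in> J" for j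
  proof -
    have "(\<alpha> j)\<^sup>2 * (sqrt eps)\<^sup>2 = \<sigma> j * (\<sigma> j * (lam j)\<^sup>2 / eps)"
      unfolding \<alpha>_def using e by (simp add: power2_eq_square field_simps)
    also have "\<dots> \<le> \<sigma> j * 1" using sig(1,3)[OF j] by (intro mult_left_mono) auto
    finally show ?thesis by simp
  qed
  have Eu2: "Eu \<le> 2 * \<Phi>"
  proof -
    have "Eu = (\<Sum>j\<in>J. (\<alpha> j)\<^sup>2 * (sqrt eps)\<^sup>2) + (\<Sum>j\<in>J. (b j)\<^sup>2)"
      unfolding Eu_def by (simp add: sum.distrib abj)
    also have "(\<Sum>j\<in>J. (\<alpha> j)\<^sup>2 * (sqrt eps)\<^sup>2) \<le> S\<sigma>" unfolding S\<sigma>_def by (intro sum_mono aeps)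
    finally show ?thesis using SsPhi bias by linarith
  qed
  have Ubound: "measure (PiM UNIV Dc) {Y \<in> space (PiM UNIV Dc). U0 < u Y} \<le> 8 * L / real m"
  proof -
    have "measure (PiM UNIV Dc) {Y \<in> space (PiM UNIV Dc). U0 < (\<Sum>j\<in>J. (\<alpha> j * Y j + \<beta> j)\<^sup>2)} \<le> 4 * ell * Eu / \<Phi>\<^sup>2"
    proof (rule data_cheb[where \<mu>="\<lambda>j. lam j * \<theta> j" and s="\<lambda>_. sqrt eps", OF Dcp Dcs])
      show "finite J" unfolding J_def by simp
      show "Dc j = density lborel (normal_density (lam j * \<theta> j) (sqrt eps))" for j unfolding Dc_def ..
      show "0 < sqrt eps" using e by simp
      show "(\<alpha> j)\<^sup>2 * (sqrt eps)\<^sup>2 \<le> ell" if "j \<in> J" for j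
        using aeps[OF that] sig(2)[OF that] ellj[OF that] by linarith
      show "Eu = (\<Sum>j\<in>J. (\<alpha> j)\<^sup>2 * (sqrt eps)\<^sup>2 + (\<alpha> j * (lam j * \<theta> j) + \<beta> j)\<^sup>2)" unfolding Eu_def ..
      show "0 < \<Phi>" by (rule Phipos)
      show "Eu + \<Phi> \<le> U0"
      proof -
        have "3 * 1 * \<Phi> \<le> 3 * max 1 r * \<Phi>" using Phipos by (intro mult_right_mono) auto
        then show ?thesis unfolding U0_def using Eu2 by linarith
      qed
    qed
    also have "4 * ell * Eu / \<Phi>\<^sup>2 \<le> 4 * ell * (2 * \<Phi>) / \<Phi>\<^sup>2"
      using Eu2 ell0 by (intro divide_right_mono mult_left_mono) auto
    also have "\<dots> = 8 * ell / \<Phi>" using Phipos by (simp add: power2_eq_square)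
    also have "\<dots> \<le> 8 * (L * \<Phi> / real m) / \<Phi>" using ell_le Phipos by (intro divide_right_mono) auto
    also have "\<dots> = 8 * L / real m" using Phipos by simp
    finally show ?thesis unfolding ueq .
  qed
  define U where "U = {Y \<in> space (PiM UNIV Dc). U0 < u Y}"
  have Umeas: "U \<in> sets (PiM UNIV Dc)" unfolding U_def ueq by measurable
  define h where "h Y = (1 - aa) - indicator U Y" for Y :: "nat \<Rightarrow> real"
  have Uint: "integrable (PiM UNIV Dc) (indicator U :: _ \<Rightarrow> real)"
    using Umeas by (intro integrable_real_indicator) (auto simp: D.emeasure_space_1 less_top[symmetric] D.emeasure_finite)
  have hint: "integrable (PiM UNIV Dc) h" unfolding h_def using Uint by (intro Bochner_Integration.integrable_diff) auto
  have hg: "h Y \<le> g Y" if "Y \<in> space (PiM UNIV Dc)" for Y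
  proof (cases "Y \<in> U")
    case True
    have "0 \<le> aa" unfolding aa_def using L_ge d_pos kpos mpos by (intro add_nonneg_nonneg divide_nonneg_nonneg) auto
    then show ?thesis using True g01[of Y] unfolding h_def by simp
  next
    case False
    then have "u Y \<le> U0" using that unfolding U_def by auto
    then show ?thesis using False point unfolding h_def by simp
  qed
  have "integral\<^sup>L (PiM UNIV Dc) h = (1 - aa) - measure (PiM UNIV Dc) U"
    unfolding h_def using Umeas Uint by (subst Bochner_Integration.integral_diff) (auto simp: D.prob_space)
  also have "\<dots> \<ge> (1 - aa) - 8 * L / real m" using Ubound unfolding U_def by linarith
  finally have "(1 - aa) - 8 * L / real m \<le> integral\<^sup>L (PiM UNIV Dc) h" .
  also have "integral\<^sup>L (PiM UNIV Dc) h \<le> integral\<^sup>L (PiM UNIV Dc) g"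
    by (rule integral_mono[OF hint gint]) (rule hg)
  also have "(1 - aa) - 8 * L / real m = 1 - (16*L*(1+d)/(d*\<kappa>) + 16*L) / real m"
    unfolding aa_def using d_pos kpos mpos by (simp add: field_simps)
  finally have fin: "1 - (16*L*(1+d)/(d*\<kappa>) + 16*L) / real m \<le> integral\<^sup>L (data_law lam eps \<theta>) g"
    unfolding Deq by simp
  show ?thesis using fin unfolding g_def m_def \<Phi>_def \<kappa>_def .
qed


lemma post_prob: "0 < eps \<Longrightarrow> eps < 1 \<Longrightarrow> prob_space (posterior lam eta tau eps m Y)"
  unfolding posterior_def
proof (intro prob_space_PiM)
  fix j assume e: "0 < eps" "eps < 1"
  show "prob_space (if 1 \<le> j \<and> j \<le> m
      then density lborel (normal_density (post_mean lam eta tau eps Y j) (sqrt (post_var lam tau eps j)))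
      else return borel (eta j))"
  proof (cases "1 \<le> j \<and> j \<le> m")
    case True
    then have "0 < sqrt (post_var lam tau eps j)" using sigma_facts(1)[OF e] by auto
    then show ?thesis using True by (subst if_P) (auto intro: prob_space_normal_density)
  next
    case False then show ?thesis by (subst if_not_P) (auto intro: prob_space_return)
  qed
qed

lemma int_le1:
  fixes f :: "'b \<Rightarrow> real"
  assumes "prob_space M" "\<And>x. f x \<le> 1"
  shows "integral\<^sup>L M f \<le> 1"
proof (cases "integrable M f")
  case True
  interpret prob_space M by fact
  have "integral\<^sup>L M f \<le> integral\<^sup>L M (\<lambda>_. 1)" by (rule integral_mono[OF True]) (auto simp: assms)
  then show ?thesis by (simp add: prob_space)
next
  case False then show ?thesis by (simp add: not_integrable_integral_eq)
qed

lemma main_ctx: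
  shows "let K = 10 * max (1 + 1 / d) (r / d\<^sup>2) * max 1 r * (L / kappa_star a lam eps_o) in
    ((\<lambda>eps. INF \<theta> \<in> ellipsoid a eta r.
        integral\<^sup>L (data_law lam eps \<theta>)
          (\<lambda>Y. measure (posterior lam eta tau eps (m_star a lam eps) Y)
             {v \<in> space (posterior lam eta tau eps (m_star a lam eps) Y).
                Phi_star a lam eps / K \<le> sqnorm (\<lambda>j. v j - \<theta> j) \<and>
                sqnorm (\<lambda>j. v j - \<theta> j) \<le> K * Phi_star a lam eps}))
      \<longlongrightarrow> 1) (at_right 0)"
  unfolding Let_def
proof -
  define K where "K = 10 * max (1 + 1 / d) (r / d\<^sup>2) * max 1 r * (L / kappa_star a lam eps_o)"
  define C where "C = 16*L*(1+d)/(d*kappa_star a lam eps_o) + 16*L"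
  define I where "I eps \<theta> = integral\<^sup>L (data_law lam eps \<theta>)
          (\<lambda>Y. measure (posterior lam eta tau eps (m_star a lam eps) Y)
             {v \<in> space (posterior lam eta tau eps (m_star a lam eps) Y).
                Phi_star a lam eps / K \<le> sqnorm (\<lambda>j. v j - \<theta> j) \<and>
                sqnorm (\<lambda>j. v j - \<theta> j) \<le> K * Phi_star a lam eps})" for eps \<theta>
  have eta_in: "eta \<in> ellipsoid a eta r" unfolding ellipsoid_def using r_pos by simp
  have I01: "0 \<le> I eps \<theta> \<and> I eps \<theta> \<le> 1" if e: "0 < eps" "eps < 1" for eps \<theta>
  proof -
    have dp: "prob_space (data_law lam eps \<theta>)" unfolding data_law_def
      using e by (intro prob_space_PiM prob_space_normal_density) auto
    have pp: "\<And>Y. prob_space (posterior lam eta tau eps (m_star a lam eps) Y)" by (rule post_prob[OF e])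
    show ?thesis unfolding I_def
      using pp by (intro conjI Bochner_Integration.integral_nonneg int_le1[OF dp]) (auto simp: prob_space.prob_le_1)
  qed
  have ev1: "eventually (\<lambda>eps. 0 < eps \<and> eps < eps_o) (at_right (0::real))"
    using eventually_at_right_real[OF eps_o(1)] by (auto elim: eventually_mono)
  have l1: "0 < Lam lam 1" by (rule Lam_pos) simp
  have ev2: "eventually (\<lambda>eps. L * Phi_star a lam eps \<le> Lam lam 1) (at_right 0)"
  proof -
    have "eventually (\<lambda>eps. Phi_star a lam eps < Lam lam 1 / L) (at_right 0)"
      using order_tendstoD(2)[OF Phi_tendsto] l1 L_ge by simp
    then show ?thesis by eventually_elim (use L_ge in \<open>simp add: field_simps\<close>)
  qed
  have ev3: "eventually (\<lambda>eps. BB\<^sup>2 * Phi_star a lam eps \<le> 1) (at_right 0)"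
  proof -
    have "eventually (\<lambda>eps. Phi_star a lam eps < 1 / BB\<^sup>2) (at_right 0)"
      using order_tendstoD(2)[OF Phi_tendsto] BB(2) by simp
    then show ?thesis by eventually_elim (use BB(2) in \<open>simp add: field_simps\<close>)
  qed
  have ev4: "eventually (\<lambda>eps. r * L \<le> d\<^sup>2 * real (m_star a lam eps)) (at_right 0)"
  proof -
    have "eventually (\<lambda>eps. nat \<lceil>r * L / d\<^sup>2\<rceil> \<le> m_star a lam eps) (at_right 0)"
      using mstar_at_top[unfolded filterlim_at_top] by blast
    then show ?thesis
    proof eventually_elim
      case (elim eps)
      have "r * L / d\<^sup>2 \<le> real (m_star a lam eps)"
        using elim by (meson le_nat_iff of_nat_le_iff order_trans real_nat_ceiling_ge)
      then show ?case using d_pos by (simp add: field_simps)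
    qed
  qed
  have low: "eventually (\<lambda>eps. 1 - C / real (m_star a lam eps) \<le> (INF \<theta> \<in> ellipsoid a eta r. I eps \<theta>)) (at_right 0)"
    using ev1 ev2 ev3 ev4
  proof eventually_elim
    case (elim eps)
    show ?case
    proof (rule cINF_greatest)
      show "ellipsoid a eta r \<noteq> {}" using eta_in by auto
      fix \<theta> assume th: "\<theta> \<in> ellipsoid a eta r"
      show "1 - C / real (m_star a lam eps) \<le> I eps \<theta>"
        unfolding C_def I_def using core[OF _ _ _ _ _ th K_def] elim by auto
    qed
  qed
  have up: "eventually (\<lambda>eps. (INF \<theta> \<in> ellipsoid a eta r. I eps \<theta>) \<le> 1) (at_right 0)"
    using ev1
  proof eventually_elim
    case (elim eps)
    have e: "0 < eps" "eps < 1" using elim eps_o by auto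
    have "(INF \<theta> \<in> ellipsoid a eta r. I eps \<theta>) \<le> I eps eta"
      by (rule cINF_lower[OF _ eta_in]) (use I01[OF e] in \<open>auto intro!: bdd_belowI2[of _ 0]\<close>)
    also have "\<dots> \<le> 1" using I01[OF e] by auto
    finally show ?case .
  qed
  have mreal: "filterlim (\<lambda>eps. real (m_star a lam eps)) at_infinity (at_right 0)"
    by (rule filterlim_at_top_imp_at_infinity filterlim_compose[OF filterlim_real_sequentially mstar_at_top])+
  have lim: "((\<lambda>eps. 1 - C / real (m_star a lam eps)) \<longlongrightarrow> 1) (at_right 0)"
    using tendsto_diff[OF tendsto_const tendsto_divide_0[OF tendsto_const mreal], of 1 C] by simp
  have "((\<lambda>eps. INF \<theta> \<in> ellipsoid a eta r. I eps \<theta>) \<longlongrightarrow> 1) (at_right 0)"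
    by (rule tendsto_sandwich[OF low up lim tendsto_const])
  then show "((\<lambda>eps. INF \<theta> \<in> ellipsoid a eta r.
        integral\<^sup>L (data_law lam eps \<theta>)
          (\<lambda>Y. measure (posterior lam eta tau eps (m_star a lam eps) Y)
             {v \<in> space (posterior lam eta tau eps (m_star a lam eps) Y).
                Phi_star a lam eps / (10 * max (1 + 1 / d) (r / d\<^sup>2) * max 1 r * (L / kappa_star a lam eps_o)) \<le> sqnorm (\<lambda>j. v j - \<theta> j) \<and>
                sqnorm (\<lambda>j. v j - \<theta> j) \<le> (10 * max (1 + 1 / d) (r / d\<^sup>2) * max 1 r * (L / kappa_star a lam eps_o)) * Phi_star a lam eps}))
      \<longlongrightarrow> 1) (at_right 0)"
    unfolding I_def K_def .
qed

end



theorem mainTheorem10: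
  fixes lam eta a :: "nat \<Rightarrow> real"
    and tau :: "real \<Rightarrow> nat \<Rightarrow> real"
    and d r L eps_o :: real
  assumes lam_bdd: "\<exists>B. \<forall>j\<ge>1. \<bar>lam j\<bar> \<le> B"
    and lam_nz: "\<forall>j\<ge>1. lam j \<noteq> 0"
    and tau_pos: "\<forall>eps. 0 < eps \<and> eps < 1 \<longrightarrow> (\<forall>j\<ge>1. 0 < tau eps j)"
    and a_pos: "\<forall>j\<ge>1. 0 < a j"
    and a_mono: "\<forall>j k. 1 \<le> j \<and> j \<le> k \<longrightarrow> a k \<le> a j"
    and a_one: "a 1 = 1"
    and a_lim: "a \<longlonglongrightarrow> 0"
    and eps_o: "0 < eps_o" "eps_o < 1"
    and d_pos: "0 < d"
    and assmA: "\<forall>eps. 0 < eps \<and> eps < 1 \<longrightarrow>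
       (\<forall>j. 1 \<le> j \<and> j \<le> G_eps lam eps \<longrightarrow>
          d * max (sqrt eps * sqrt (Lam lam j)) (eps * Lam lam j) \<le> tau eps j)"
    and assmM: "0 < kappa_star a lam eps_o"
    and r_pos: "0 < r"
    and L_ge: "1 \<le> L"
    and L_bound: "\<forall>eps. 0 < eps \<and> eps < eps_o \<longrightarrow>
       eps * real (m_star a lam eps) * Lam_max lam (m_star a lam eps) / Phi_star a lam eps \<le> L"
  shows "let K = 10 * max (1 + 1 / d) (r / d\<^sup>2) * max 1 r * (L / kappa_star a lam eps_o) in
    ((\<lambda>eps. INF \<theta> \<in> ellipsoid a eta r.
        integral\<^sup>L (data_law lam eps \<theta>)
          (\<lambda>Y. measure (posterior lam eta tau eps (m_star a lam eps) Y)
             {v \<in> space (posterior lam eta tau eps (m_star a lam eps) Y).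
                Phi_star a lam eps / K \<le> sqnorm (\<lambda>j. v j - \<theta> j) \<and>
                sqnorm (\<lambda>j. v j - \<theta> j) \<le> K * Phi_star a lam eps}))
      \<longlongrightarrow> 1) (at_right 0)"
  by (rule main_ctx[OF lam_bdd lam_nz a_pos a_mono a_one a_lim tau_pos eps_o d_pos assmA assmM r_pos L_ge L_bound])

end
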